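(* Let $\Phi$ be a Leonard system in $\mathcal A$ with eigenvalue sequence $\theta_0,\dots,\theta_d$ and dual eigenvalue sequence $\theta^*_0,\dots,\theta^*_d$, let $u_0,\dots,u_d$ be its polynomials as defined below, and let $u^*_0,\dots,u^*_d$ be the corresponding polynomials for $\Phi^*$. Then $$u_i(\theta_j)=u^*_j(\theta^*_i)\qquad(0\le i,j\le d).$$
   Context: Let $\mathbb K$ be a field, $d\ge 0$ an integer, and $\mathcal A$ a $\mathbb K$-algebra isomorphic to $\mathrm{Mat}_{d+1}(\mathbb K)$, with identity $I$ and trace $\mathrm{tr}$. An element $A\in\mathcal A$ is multiplicity-free if it has $d+1$ mutually distinct eigenvalues in $\mathbb K$; if $\theta_0,\dots,\theta_d$ is an ordering of them, the primitive idempotent of $A$ associated with $\theta_i$ is $E_i=\prod_{j\ne i}(A-\theta_jI)/(\theta_i-\theta_j)$. A Leonard system in $\mathcal A$ is a sequence $\Phi=(A;A^*;\{E_i\}_{i=0}^d;\{E^*_i\}_{i=0}^d)$ such that: (i) $A,A^*$ are multiplicity-free; (ii) $E_0,\dots,E_d$ is an ordering of the primitive idempotents of $A$; (iii) $E^*_0,\dots,E^*_d$ is an ordering of those of $A^*$; (iv) $E_iA^*E_j=0$ if $|i-j|>1$ and $\ne0$ if $|i-j|=1$ $(0\le i,j\le d)$; (v) $E^*_iAE^*_j=0$ if $|i-j|>1$ and $\neq0$ if $|i-j|=1$ $(0\le i,j\le d)$. $\theta_i$ (resp. $\theta^*_i$) is the eigenvalue of $A$ (resp. $A^*$) associated with $E_i$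 (resp. $E^*_i$). The dual Leonard system is $\Phi^*=(A^*;A;\{E^*_i\}_{i=0}^d;\{E_i\}_{i=0}^d)$. Define $a_i=\mathrm{tr}(E^*_iA)$ $(0\le i\le d)$, $x_i=\mathrm{tr}(E^*_iAE^*_{i-1}A)$ $(1\le i\le d)$, $x_0=0$, and polynomials $p_0,\dots,p_{d+1}$ by $p_0=1$, $p_{-1}=0$, $\lambda p_i=p_{i+1}+a_ip_i+x_ip_{i-1}$ $(0\le i\le d)$. One has $p_i(\theta_0)\ne0$ for $0\le i\le d$, and $u_i:=p_i/p_i(\theta_0)$ $(0\le i\le d)$. *)

theory Defs
  imports "Jordan_Normal_Form.Char_Poly" "HOL-Computational_Algebra.Polynomial"
begin

text \<open>The algebra is taken to be the full matrix algebra of (d+1) x (d+1) matrices over K.\<close>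

definition mtrace :: "'a::comm_ring_1 mat \<Rightarrow> 'a" where
  "mtrace M = (\<Sum>i<dim_row M. M $$ (i, i))"

fun mat_list_prod :: "nat \<Rightarrow> 'a::comm_ring_1 mat list \<Rightarrow> 'a mat" where
  "mat_list_prod n [] = 1\<^sub>m n"
| "mat_list_prod n (M # Ms) = M * mat_list_prod n Ms"

definition prim_idem :: "nat \<Rightarrow> 'a::field mat \<Rightarrow> (nat \<Rightarrow> 'a) \<Rightarrow> nat \<Rightarrow> 'a mat" where
  "prim_idem d A th i =
     mat_list_prod (Suc d)
       (map (\<lambda>j. (1 / (th i - th j)) \<cdot>\<^sub>m (A - th j \<cdot>\<^sub>m 1\<^sub>m (Suc d)))
            (filter (\<lambda>j. j \<noteq> i) [0..<Suc d]))"

definition mult_free :: "nat \<Rightarrow> 'a::field mat \<Rightarrow> bool" where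
  "mult_free d A \<longleftrightarrow> A \<in> carrier_mat (Suc d) (Suc d) \<and>
     (\<exists>th. inj_on th {..d} \<and> (\<forall>i\<le>d. eigenvalue A (th i)))"

definition idem_ordering :: "nat \<Rightarrow> 'a::field mat \<Rightarrow> (nat \<Rightarrow> 'a) \<Rightarrow> (nat \<Rightarrow> 'a mat) \<Rightarrow> bool" where
  "idem_ordering d A th E \<longleftrightarrow> inj_on th {..d} \<and> (\<forall>i\<le>d. eigenvalue A (th i)) \<and>
     (\<forall>i\<le>d. E i = prim_idem d A th i)"

definition tridiag_cond :: "nat \<Rightarrow> (nat \<Rightarrow> 'a::field mat) \<Rightarrow> 'a mat \<Rightarrow> bool" where
  "tridiag_cond d E B \<longleftrightarrow> (\<forall>i\<le>d. \<forall>j\<le>d.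
      (Suc i < j \<or> Suc j < i \<longrightarrow> E i * B * E j = 0\<^sub>m (Suc d) (Suc d)) \<and>
      (Suc i = j \<or> Suc j = i \<longrightarrow> E i * B * E j \<noteq> 0\<^sub>m (Suc d) (Suc d)))"

definition leonard_system :: "nat \<Rightarrow> 'a::field mat \<Rightarrow> 'a mat \<Rightarrow> (nat \<Rightarrow> 'a mat) \<Rightarrow> (nat \<Rightarrow> 'a mat) \<Rightarrow> bool" where
  "leonard_system d A As E Es \<longleftrightarrow>
     mult_free d A \<and> mult_free d As \<and>
     (\<exists>th. idem_ordering d A th E) \<and> (\<exists>ths. idem_ordering d As ths Es) \<and>
     tridiag_cond d E As \<and> tridiag_cond d Es A"

definition ls_a :: "'a::field mat \<Rightarrow> (nat \<Rightarrow> 'a mat) \<Rightarrow> nat \<Rightarrow> 'a" where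
  "ls_a A Es i = mtrace (Es i * A)"

definition ls_x :: "'a::field mat \<Rightarrow> (nat \<Rightarrow> 'a mat) \<Rightarrow> nat \<Rightarrow> 'a" where
  "ls_x A Es i = (if i = 0 then 0 else mtrace (Es i * A * Es (i - 1) * A))"

text \<open>p_0 = 1, p_{-1} = 0, lambda p_i = p_{i+1} + a_i p_i + x_i p_{i-1}.\<close>
fun lpoly :: "(nat \<Rightarrow> 'a::field) \<Rightarrow> (nat \<Rightarrow> 'a) \<Rightarrow> nat \<Rightarrow> 'a poly" where
  "lpoly a x 0 = 1"
| "lpoly a x (Suc 0) = [:- a 0, 1:]"
| "lpoly a x (Suc (Suc i)) =
     [:- a (Suc i), 1:] * lpoly a x (Suc i) - Polynomial.smult (x (Suc i)) (lpoly a x i)"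

definition ls_p :: "'a::field mat \<Rightarrow> (nat \<Rightarrow> 'a mat) \<Rightarrow> nat \<Rightarrow> 'a poly" where
  "ls_p A Es i = lpoly (ls_a A Es) (ls_x A Es) i"

definition ls_u :: "'a::field mat \<Rightarrow> (nat \<Rightarrow> 'a mat) \<Rightarrow> (nat \<Rightarrow> 'a) \<Rightarrow> nat \<Rightarrow> 'a \<Rightarrow> 'a" where
  "ls_u A Es th i t = poly (ls_p A Es i) t / poly (ls_p A Es i) (th 0)"

end

theory Submission
  imports Defs
begin


lemma mtrace_comm:
  fixes X Y :: "'a::comm_ring_1 mat"
  assumes "X \<in> carrier_mat n m" "Y \<in> carrier_mat m n"
  shows "mtrace (X * Y) = mtrace (Y * X)"
proof -
  have "mtrace (X * Y) = (\<Sum>i<n. \<Sum>k<m. X $$ (i,k) * Y $$ (k,i))"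
    using assms by (simp add: mtrace_def scalar_prod_def atLeast0LessThan)
  also have "\<dots> = (\<Sum>k<m. \<Sum>i<n. Y $$ (k,i) * X $$ (i,k))"
    by (subst sum.swap) (simp add: mult.commute)
  also have "\<dots> = mtrace (Y * X)"
    using assms by (simp add: mtrace_def scalar_prod_def atLeast0LessThan)
  finally show ?thesis .
qed

lemma mtrace_transpose:
  assumes "X \<in> carrier_mat n n"
  shows "mtrace (transpose_mat X) = mtrace X"
  using assms by (simp add: mtrace_def)

lemma mtrace_smult:
  assumes "X \<in> carrier_mat n n"
  shows "mtrace (c \<cdot>\<^sub>m X) = c * mtrace X"
  using assms by (simp add: mtrace_def sum_distrib_left)

lemma transpose_smult: "transpose_mat (c \<cdot>\<^sub>m X) = c \<cdot>\<^sub>m transpose_mat X"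
  by (rule eq_matI) auto

lemma transpose_zero: "transpose_mat (0\<^sub>m n m) = 0\<^sub>m m n"
  by (rule eq_matI) auto

lemma transpose_inj: "transpose_mat X = transpose_mat Y \<Longrightarrow> X = Y"
  by (metis transpose_transpose)

lemma nonzero_entry:
  assumes "X \<in> carrier_mat n m" "X \<noteq> 0\<^sub>m n m"
  obtains a b where "a < n" "b < m" "X $$ (a,b) \<noteq> 0"
proof -
  have "\<exists>a b. a < n \<and> b < m \<and> X $$ (a,b) \<noteq> 0"
  proof (rule ccontr)
    assume "\<not> ?thesis"
    then have "X = 0\<^sub>m n m" using assms(1) by (intro eq_matI) auto
    with assms(2) show False by simp
  qed
  then show ?thesis using that by blast
qed

definition unitm :: "nat \<Rightarrow> nat \<Rightarrow> nat \<Rightarrow> 'a::comm_ring_1 mat" where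
  "unitm n a b = mat n n (\<lambda>(r,s). if r = a \<and> s = b then 1 else 0)"

lemma unitm_carrier[simp]: "unitm n a b \<in> carrier_mat n n"
  by (simp add: unitm_def)

lemma unitm_dim[simp]: "dim_row (unitm n a b) = n" "dim_col (unitm n a b) = n"
  by (simp_all add: unitm_def)

lemma mult_unitm_index:
  fixes X :: "'a::comm_ring_1 mat"
  assumes "X \<in> carrier_mat m n" "r < m" "s < n" "a < n"
  shows "(X * unitm n a b) $$ (r,s) = (if s = b then X $$ (r,a) else 0)"
proof -
  have "(X * unitm n a b) $$ (r,s) = (\<Sum>k<n. X $$ (r,k) * (if k = a \<and> s = b then 1 else 0))"
    using assms by (simp add: unitm_def scalar_prod_def atLeast0LessThan)
  also have "\<dots> = (\<Sum>k<n. if k = a then (if s = b then X $$ (r,k) else 0) else 0)"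
    by (rule sum.cong) auto
  also have "\<dots> = (if s = b then X $$ (r,a) else 0)"
    using assms by (simp add: sum.delta)
  finally show ?thesis .
qed

lemma exists_trace_nz:
  fixes X :: "'a::comm_ring_1 mat"
  assumes "X \<in> carrier_mat n n" "X \<noteq> 0\<^sub>m n n"
  shows "\<exists>M\<in>carrier_mat n n. mtrace (X * M) \<noteq> 0"
proof -
  obtain a b where ab: "a < n" "b < n" "X $$ (a,b) \<noteq> 0" using nonzero_entry[OF assms] .
  have h: "r < n \<Longrightarrow> (X * unitm n b a) $$ (r,r) = (if r = a then X $$ (r,b) else 0)" for r
    using mult_unitm_index[OF assms(1), of r r b a] ab by auto
  have "mtrace (X * unitm n b a) = (\<Sum>r<n. if r = a then X $$ (r,b) else 0)"
    using assms ab unfolding mtrace_def by (simp del: index_mult_mat add: h index_mult_mat(2,3))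
  also have "\<dots> = X $$ (a,b)" using ab by (simp add: sum.delta)
  finally show ?thesis using ab by (intro bexI[of _ "unitm n b a"]) auto
qed

lemma exists_sandwich_nz:
  fixes X Y :: "'a::field mat"
  assumes X: "X \<in> carrier_mat n n" "X \<noteq> 0\<^sub>m n n"
    and Y: "Y \<in> carrier_mat n n" "Y \<noteq> 0\<^sub>m n n"
  shows "\<exists>M\<in>carrier_mat n n. X * M * Y \<noteq> 0\<^sub>m n n"
proof -
  obtain a b where ab: "a < n" "b < n" "X $$ (a,b) \<noteq> 0" using nonzero_entry[OF X] .
  obtain c e where ce: "c < n" "e < n" "Y $$ (c,e) \<noteq> 0" using nonzero_entry[OF Y] .
  let ?M = "unitm n b c :: 'a mat"
  have "(X * ?M * Y) $$ (a,e) = (\<Sum>s<n. (X * ?M) $$ (a,s) * Y $$ (s,e))"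
    using X Y ab ce by (simp add: scalar_prod_def atLeast0LessThan)
  also have "\<dots> = (\<Sum>s<n. if s = c then X $$ (a,b) * Y $$ (s,e) else 0)"
    using X ab ce mult_unitm_index[OF X(1), of a _ b c] by (intro sum.cong) auto
  also have "\<dots> = X $$ (a,b) * Y $$ (c,e)" using ce by (simp add: sum.delta)
  finally have "(X * ?M * Y) $$ (a,e) \<noteq> 0" using ab ce by simp
  then have "X * ?M * Y \<noteq> 0\<^sub>m n n" using ab ce by auto
  then show ?thesis by (intro bexI[of _ ?M]) auto
qed

lemma smult_cancel_mat:
  fixes F :: "'a::field mat"
  assumes "F \<in> carrier_mat n m" "F \<noteq> 0\<^sub>m n m" "c \<cdot>\<^sub>m F = e \<cdot>\<^sub>m F"
  shows "c = e"
proof -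
  obtain a b where ab: "a < n" "b < m" "F $$ (a,b) \<noteq> 0" using nonzero_entry[OF assms(1,2)] .
  have "(c \<cdot>\<^sub>m F) $$ (a,b) = (e \<cdot>\<^sub>m F) $$ (a,b)" using assms(3) by simp
  then show ?thesis using ab assms(1) by simp
qed

lemma smult_zero_imp:
  fixes F :: "'a::field mat"
  assumes "F \<in> carrier_mat n m" "F \<noteq> 0\<^sub>m n m" "c \<cdot>\<^sub>m F = 0\<^sub>m n m"
  shows "c = 0"
proof -
  obtain a b where ab: "a < n" "b < m" "F $$ (a,b) \<noteq> 0" using nonzero_entry[OF assms(1,2)] .
  have "(c \<cdot>\<^sub>m F) $$ (a,b) = (0\<^sub>m n m :: 'a mat) $$ (a,b)" using assms(3) by simp
  then show ?thesis using ab assms(1) by simp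
qed



definition idem_ax :: "nat \<Rightarrow> 'a::field mat \<Rightarrow> (nat \<Rightarrow> 'a) \<Rightarrow> (nat \<Rightarrow> 'a mat) \<Rightarrow> bool" where
 "idem_ax d A th E \<longleftrightarrow> A \<in> carrier_mat (Suc d) (Suc d) \<and>
   (\<forall>i\<le>d. E i \<in> carrier_mat (Suc d) (Suc d)) \<and>
   (\<forall>i\<le>d. \<forall>j\<le>d. E i * E j = (if i = j then E i else 0\<^sub>m (Suc d) (Suc d))) \<and>
   (\<forall>i\<le>d. A * E i = th i \<cdot>\<^sub>m E i) \<and> (\<forall>i\<le>d. E i * A = th i \<cdot>\<^sub>m E i) \<and>
   (\<forall>i\<le>d. \<forall>M\<in>carrier_mat (Suc d) (Suc d). E i * M * E i = mtrace (E i * M) \<cdot>\<^sub>m E i) \<and>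
   (\<forall>i\<le>d. E i \<noteq> 0\<^sub>m (Suc d) (Suc d)) \<and>
   (\<forall>X\<in>carrier_mat (Suc d) (Suc d). \<forall>Y\<in>carrier_mat (Suc d) (Suc d).
      (\<forall>i\<le>d. E i * X = E i * Y) \<longrightarrow> X = Y) \<and>
   (\<forall>X\<in>carrier_mat (Suc d) (Suc d). \<forall>Y\<in>carrier_mat (Suc d) (Suc d).
      (\<forall>i\<le>d. X * E i = Y * E i) \<longrightarrow> X = Y)"

definition lsax :: "nat \<Rightarrow> 'a::field mat \<Rightarrow> 'a mat \<Rightarrow> (nat \<Rightarrow> 'a) \<Rightarrow> (nat \<Rightarrow> 'a) \<Rightarrow>
    (nat \<Rightarrow> 'a mat) \<Rightarrow> (nat \<Rightarrow> 'a mat) \<Rightarrow> bool" where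
  "lsax d A As th ths E Es \<longleftrightarrow> idem_ax d A th E \<and> idem_ax d As ths Es \<and>
     tridiag_cond d E As \<and> tridiag_cond d Es A"

locale LSA =
  fixes d :: nat and A As :: "'a::field mat" and th ths :: "nat \<Rightarrow> 'a" and E Es :: "nat \<Rightarrow> 'a mat"
  assumes ax: "lsax d A As th ths E Es"
begin

declare assoc_mult_mat[simp del]

abbreviation "N \<equiv> Suc d"

lemma cA[simp]: "A \<in> carrier_mat N N" using ax by (simp add: lsax_def idem_ax_def)
lemma cAs[simp]: "As \<in> carrier_mat N N" using ax by (simp add: lsax_def idem_ax_def)
lemma cE[simp]: "i \<le> d \<Longrightarrow> E i \<in> carrier_mat N N" using ax by (simp add: lsax_def idem_ax_def)
lemma cEs[simp]: "i \<le> d \<Longrightarrow> Es i \<in> carrier_mat N N" using ax by (simp add: lsax_def idem_ax_def)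
lemma EE: "i \<le> d \<Longrightarrow> j \<le> d \<Longrightarrow> E i * E j = (if i = j then E i else 0\<^sub>m N N)"
  using ax by (simp add: lsax_def idem_ax_def)
lemma EsEs: "i \<le> d \<Longrightarrow> j \<le> d \<Longrightarrow> Es i * Es j = (if i = j then Es i else 0\<^sub>m N N)"
  using ax by (simp add: lsax_def idem_ax_def)
lemma AE: "i \<le> d \<Longrightarrow> A * E i = th i \<cdot>\<^sub>m E i" using ax by (simp add: lsax_def idem_ax_def)
lemma EA: "i \<le> d \<Longrightarrow> E i * A = th i \<cdot>\<^sub>m E i" using ax by (simp add: lsax_def idem_ax_def)
lemma rk: "i \<le> d \<Longrightarrow> M \<in> carrier_mat N N \<Longrightarrow> E i * M * E i = mtrace (E i * M) \<cdot>\<^sub>m E i"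
  using ax by (simp add: lsax_def idem_ax_def)
lemma rks: "i \<le> d \<Longrightarrow> M \<in> carrier_mat N N \<Longrightarrow> Es i * M * Es i = mtrace (Es i * M) \<cdot>\<^sub>m Es i"
  using ax by (simp add: lsax_def idem_ax_def)
lemma Enz: "i \<le> d \<Longrightarrow> E i \<noteq> 0\<^sub>m N N" using ax by (simp add: lsax_def idem_ax_def)
lemma Esnz: "i \<le> d \<Longrightarrow> Es i \<noteq> 0\<^sub>m N N" using ax by (simp add: lsax_def idem_ax_def)
lemma Ecl: assumes "X \<in> carrier_mat N N" "Y \<in> carrier_mat N N" "\<And>i. i \<le> d \<Longrightarrow> E i * X = E i * Y" shows "X = Y"
proof -
  have "\<forall>X\<in>carrier_mat N N. \<forall>Y\<in>carrier_mat N N. (\<forall>i\<le>d. E i * X = E i * Y) \<longrightarrow> X = Y"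
    using ax unfolding lsax_def idem_ax_def by (elim conjE) assumption+
  then show ?thesis using assms by blast
qed
lemma Ecr: assumes "X \<in> carrier_mat N N" "Y \<in> carrier_mat N N" "\<And>i. i \<le> d \<Longrightarrow> X * E i = Y * E i" shows "X = Y"
proof -
  have "\<forall>X\<in>carrier_mat N N. \<forall>Y\<in>carrier_mat N N. (\<forall>i\<le>d. X * E i = Y * E i) \<longrightarrow> X = Y"
    using ax unfolding lsax_def idem_ax_def by (elim conjE) assumption+
  then show ?thesis using assms by blast
qed
lemma Escl: assumes "X \<in> carrier_mat N N" "Y \<in> carrier_mat N N" "\<And>i. i \<le> d \<Longrightarrow> Es i * X = Es i * Y" shows "X = Y"
proof -
  have "\<forall>X\<in>carrier_mat N N. \<forall>Y\<in>carrier_mat N N. (\<forall>i\<le>d. Es i * X = Es i * Y) \<longrightarrow> X = Y"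
    using ax unfolding lsax_def idem_ax_def by (elim conjE) assumption+
  then show ?thesis using assms by blast
qed
lemma Escr: assumes "X \<in> carrier_mat N N" "Y \<in> carrier_mat N N" "\<And>i. i \<le> d \<Longrightarrow> X * Es i = Y * Es i" shows "X = Y"
proof -
  have "\<forall>X\<in>carrier_mat N N. \<forall>Y\<in>carrier_mat N N. (\<forall>i\<le>d. X * Es i = Y * Es i) \<longrightarrow> X = Y"
    using ax unfolding lsax_def idem_ax_def by (elim conjE) assumption+
  then show ?thesis using assms by blast
qed
lemma tri_all: "tridiag_cond d Es A" using ax by (simp add: lsax_def)
lemma tri_allE: "tridiag_cond d E As" using ax by (simp add: lsax_def)

lemma tri0: assumes "i \<le> d" "j \<le> d" "Suc i < j \<or> Suc j < i" shows "Es i * A * Es j = 0\<^sub>m N N"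
proof -
  have "(Suc i < j \<or> Suc j < i \<longrightarrow> Es i * A * Es j = 0\<^sub>m N N)"
    using tri_all assms(1,2) unfolding tridiag_cond_def by simp
  then show ?thesis using assms(3) by simp
qed

lemma tri1: assumes "i \<le> d" "j \<le> d" "Suc i = j \<or> Suc j = i" shows "Es i * A * Es j \<noteq> 0\<^sub>m N N"
proof -
  have "(Suc i = j \<or> Suc j = i \<longrightarrow> Es i * A * Es j \<noteq> 0\<^sub>m N N)"
    using tri_all assms(1,2) unfolding tridiag_cond_def by simp
  then show ?thesis using assms(3) by simp
qed

lemma mc[simp]: "X \<in> carrier_mat N N \<Longrightarrow> Y \<in> carrier_mat N N \<Longrightarrow> X * Y \<in> carrier_mat N N"
  by (rule mult_carrier_mat)

lemma massoc: "X \<in> carrier_mat N N \<Longrightarrow> Y \<in> carrier_mat N N \<Longrightarrow> Z \<in> carrier_mat N N \<Longrightarrow> X * Y * Z = X * (Y * Z)"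
  by (rule assoc_mult_mat)

fun P :: "nat \<Rightarrow> 'a mat" where
  "P 0 = Es 0"
| "P (Suc i) = Es (Suc i) * A * P i"

declare P.simps(2)[simp del]

lemma cP[simp]: "i \<le> d \<Longrightarrow> P i \<in> carrier_mat N N"
  by (induction i) (auto simp: P.simps)

lemma sm1: "(X :: 'a mat) \<in> carrier_mat N N \<Longrightarrow> Y \<in> carrier_mat N N \<Longrightarrow> (c \<cdot>\<^sub>m X) * Y = c \<cdot>\<^sub>m (X * Y)"
  by (rule mult_smult_assoc_mat)
lemma sm2: "(X :: 'a mat) \<in> carrier_mat N N \<Longrightarrow> Y \<in> carrier_mat N N \<Longrightarrow> X * (c \<cdot>\<^sub>m Y) = c \<cdot>\<^sub>m (X * Y)"
  by (rule mult_smult_distrib)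
lemma sm3: "(X :: 'a mat) \<in> carrier_mat N N \<Longrightarrow> c \<cdot>\<^sub>m (e \<cdot>\<^sub>m X) = (c * e) \<cdot>\<^sub>m X"
  by (rule eq_matI) auto
lemma sm0: "(X :: 'a mat) \<in> carrier_mat N N \<Longrightarrow> 0 \<cdot>\<^sub>m X = 0\<^sub>m N N"
  by (rule eq_matI) auto
lemma sm1': "(X :: 'a mat) \<in> carrier_mat N N \<Longrightarrow> 1 \<cdot>\<^sub>m X = X"
  by (rule eq_matI) auto
lemma z1: "(X :: 'a mat) \<in> carrier_mat N N \<Longrightarrow> 0\<^sub>m N N * X = 0\<^sub>m N N" by simp
lemma z2: "(X :: 'a mat) \<in> carrier_mat N N \<Longrightarrow> X * 0\<^sub>m N N = 0\<^sub>m N N" by simp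

lemma EsP: "i \<le> d \<Longrightarrow> k \<le> d \<Longrightarrow> Es k * P i = (if k = i then P i else 0\<^sub>m N N)"
proof (induction i)
  case 0 then show ?case by (simp add: EsEs)
next
  case (Suc i)
  have "Es k * P (Suc i) = (Es k * Es (Suc i)) * A * P i"
    using Suc.prems by (simp add: massoc P.simps)
  then show ?case using Suc.prems by (simp add: EsEs z1 P.simps)
qed

lemma EsP_self: "i \<le> d \<Longrightarrow> Es i * P i = P i" by (simp add: EsP)

lemmas mnorm = massoc sm1 sm2 sm3

lemma distr3: assumes "(Z :: 'a mat) \<in> carrier_mat N N" "X \<in> carrier_mat N N" "Y \<in> carrier_mat N N" "W \<in> carrier_mat N N"
  shows "Z * (X + c \<cdot>\<^sub>m Y + e \<cdot>\<^sub>m W) = Z * X + c \<cdot>\<^sub>m (Z * Y) + e \<cdot>\<^sub>m (Z * W)"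
proof -
  have "Z * ((X + c \<cdot>\<^sub>m Y) + e \<cdot>\<^sub>m W) = Z * (X + c \<cdot>\<^sub>m Y) + Z * (e \<cdot>\<^sub>m W)"
    using assms by (intro mult_add_distrib_mat) auto
  also have "Z * (X + c \<cdot>\<^sub>m Y) = Z * X + Z * (c \<cdot>\<^sub>m Y)"
    using assms by (intro mult_add_distrib_mat) auto
  finally show ?thesis using assms by (simp add: sm2)
qed

lemma solve_sc: "(X::'a::field) + c * (u * F) + e * (v * F) = w * F \<Longrightarrow> X = (w - c * u - e * v) * F"
  by (drule sym) (simp add: algebra_simps)

lemma solve3:
  assumes "(X :: 'a mat) \<in> carrier_mat N N" "F \<in> carrier_mat N N"
    and "X + c \<cdot>\<^sub>m (u \<cdot>\<^sub>m F) + e \<cdot>\<^sub>m (v \<cdot>\<^sub>m F) = w \<cdot>\<^sub>m F"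
  shows "X = (w - c * u - e * v) \<cdot>\<^sub>m F"
proof (rule eq_matI)
  fix r s assume rs: "r < dim_row ((w - c * u - e * v) \<cdot>\<^sub>m F)" "s < dim_col ((w - c * u - e * v) \<cdot>\<^sub>m F)"
  have "(X + c \<cdot>\<^sub>m (u \<cdot>\<^sub>m F) + e \<cdot>\<^sub>m (v \<cdot>\<^sub>m F)) $$ (r,s) = (w \<cdot>\<^sub>m F) $$ (r,s)" using assms(3) by simp
  then have h: "X $$ (r,s) + c * (u * F $$ (r,s)) + e * (v * F $$ (r,s)) = w * F $$ (r,s)"
    using assms(1,2) rs by (simp add: add.assoc)
  show "X $$ (r,s) = ((w - c * u - e * v) \<cdot>\<^sub>m F) $$ (r,s)"
    using assms(1,2) rs solve_sc[OF h] by simp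
qed (use assms in auto)

lemma EsAEs: "i \<le> d \<Longrightarrow> Es i * A * Es i = ls_a A Es i \<cdot>\<^sub>m Es i"
  by (simp add: rks ls_a_def)

lemma L2b:
  assumes "Suc k \<le> d"
  shows "Es k * (A * P (Suc k)) = ls_x A Es (Suc k) \<cdot>\<^sub>m P k"
proof -
  have k: "k \<le> d" using assms by simp
  have "Es k * (A * P (Suc k)) = (Es k * (A * Es (Suc k) * A) * Es k) * P k"
    using assms k by (simp add: mnorm EsP_self P.simps)
  also have "Es k * (A * Es (Suc k) * A) * Es k = mtrace (Es k * (A * Es (Suc k) * A)) \<cdot>\<^sub>m Es k"
    using assms k by (intro rks) auto
  also have "mtrace (Es k * (A * Es (Suc k) * A)) = mtrace ((Es k * A) * (Es (Suc k) * A))"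
    using assms k by (simp add: mnorm)
  also have "\<dots> = mtrace ((Es (Suc k) * A) * (Es k * A))"
    using assms k by (intro mtrace_comm[of _ N N]) auto
  also have "\<dots> = ls_x A Es (Suc k)"
    using assms k by (simp add: ls_x_def mnorm)
  finally show ?thesis using k by (simp add: sm1 EsP_self)
qed

lemma L2:
  assumes "i < d"
  shows "A * P i = P (Suc i) + ls_a A Es i \<cdot>\<^sub>m P i + ls_x A Es i \<cdot>\<^sub>m P (i - 1)"
proof (rule Escl)
  show "A * P i \<in> carrier_mat N N" using assms by simp
  show "P (Suc i) + ls_a A Es i \<cdot>\<^sub>m P i + ls_x A Es i \<cdot>\<^sub>m P (i - 1) \<in> carrier_mat N N" using assms by simp
  fix k assume k: "k \<le> d"
  have i: "i \<le> d" "Suc i \<le> d" "i - 1 \<le> d" using assms by auto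
  have ci: "P i \<in> carrier_mat N N" "P (Suc i) \<in> carrier_mat N N" "P (i - 1) \<in> carrier_mat N N"
    "Es i \<in> carrier_mat N N" "Es (Suc i) \<in> carrier_mat N N" "Es k \<in> carrier_mat N N" using i k by auto
  have R: "Es k * (P (Suc i) + ls_a A Es i \<cdot>\<^sub>m P i + ls_x A Es i \<cdot>\<^sub>m P (i - 1))
      = Es k * P (Suc i) + ls_a A Es i \<cdot>\<^sub>m (Es k * P i) + ls_x A Es i \<cdot>\<^sub>m (Es k * P (i - 1))"
    using i k by (intro distr3) auto
  have L: "Es k * (A * P i) = (Es k * A * Es i) * P i"
    using i k by (simp add: mnorm EsP_self)
  consider "k = Suc i" | "k = i" | "Suc k = i" | "Suc k < i \<or> Suc i < k" by linarith
  then show "Es k * (A * P i) = Es k * (P (Suc i) + ls_a A Es i \<cdot>\<^sub>m P i + ls_x A Es i \<cdot>\<^sub>m P (i - 1))"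
  proof cases
    case 1
    have "Es k * (A * P i) = P (Suc i)" using 1 ci by (simp add: massoc[of "Es (Suc i)" A "P i"] P.simps)
    moreover have "Es k * P i = 0\<^sub>m N N" "Es k * P (i - 1) = 0\<^sub>m N N" "Es k * P (Suc i) = P (Suc i)"
      using 1 i by (auto simp: EsP)
    ultimately show ?thesis unfolding R using i by simp
  next
    case 2
    have "Es k * (A * P i) = ls_a A Es i \<cdot>\<^sub>m P i" unfolding L using 2 i by (simp add: EsAEs sm1 EsP_self)
    moreover have "Es k * P i = P i" "Es k * P (Suc i) = 0\<^sub>m N N" using 2 i by (auto simp: EsP)
    moreover have "ls_x A Es i \<cdot>\<^sub>m (Es k * P (i - 1)) = 0\<^sub>m N N"
    proof (cases "i = 0")
      case True then show ?thesis using ci by (simp add: ls_x_def sm0)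
    next
      case False then have "i - 1 \<noteq> i" by simp
      then show ?thesis using 2 i by (simp add: EsP)
    qed
    ultimately show ?thesis unfolding R using i by simp
  next
    case 3
    have "Es k * (A * P i) = ls_x A Es i \<cdot>\<^sub>m P (i - 1)" using 3 L2b[of k] i by auto
    moreover have "Es k * P i = 0\<^sub>m N N" "Es k * P (Suc i) = 0\<^sub>m N N" "Es k * P (i - 1) = P (i - 1)"
      using 3 i k by (auto simp: EsP)
    ultimately show ?thesis unfolding R using i by simp
  next
    case 4
    have "Es k * (A * P i) = 0\<^sub>m N N" unfolding L using 4 i k ci by (simp add: tri0 z1)
    moreover have "Es k * P i = 0\<^sub>m N N" "Es k * P (Suc i) = 0\<^sub>m N N" "Es k * P (i - 1) = 0\<^sub>m N N"
      using 4 i k by (auto simp: EsP)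
    ultimately show ?thesis unfolding R using i by simp
  qed
qed

end


context LSA begin

lemma poly_rec:
  "poly (ls_p A Es (Suc m)) t = t * poly (ls_p A Es m) t - ls_a A Es m * poly (ls_p A Es m) t
     - ls_x A Es m * poly (ls_p A Es (m - 1)) t"
  by (cases m) (simp_all add: ls_p_def ls_x_def algebra_simps)

lemma L3:
  assumes "j \<le> d" "i \<le> d"
  shows "E j * P i = poly (ls_p A Es i) (th j) \<cdot>\<^sub>m (E j * Es 0)"
  using assms(2)
proof (induction i rule: less_induct)
  case (less i)
  have cF: "E j * Es 0 \<in> carrier_mat N N" using assms by simp
  show ?case
  proof (cases i)
    case 0 then show ?thesis using cF by (simp add: ls_p_def sm1')
  next
    case (Suc m)
    have m: "m < d" "m \<le> d" "m - 1 \<le> d" using less.prems Suc by auto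
    have IH1: "E j * P m = poly (ls_p A Es m) (th j) \<cdot>\<^sub>m (E j * Es 0)"
      using less.IH[of m] Suc m by auto
    have IH2: "E j * P (m - 1) = poly (ls_p A Es (m - 1)) (th j) \<cdot>\<^sub>m (E j * Es 0)"
      using less.IH[of "m - 1"] Suc m by auto
    have c: "P m \<in> carrier_mat N N" "P (Suc m) \<in> carrier_mat N N" "P (m - 1) \<in> carrier_mat N N"
      "E j \<in> carrier_mat N N" using m assms by auto
    have "E j * (A * P m) = (E j * A) * P m" using c by (simp add: massoc)
    also have "\<dots> = th j \<cdot>\<^sub>m (E j * P m)" using c assms by (simp add: EA sm1)
    also have "\<dots> = (th j * poly (ls_p A Es m) (th j)) \<cdot>\<^sub>m (E j * Es 0)" unfolding IH1 using cF by (simp add: sm3)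
    finally have h1: "E j * (A * P m) = (th j * poly (ls_p A Es m) (th j)) \<cdot>\<^sub>m (E j * Es 0)" .
    have "E j * (A * P m) = E j * P (Suc m) + ls_a A Es m \<cdot>\<^sub>m (E j * P m) + ls_x A Es m \<cdot>\<^sub>m (E j * P (m - 1))"
      unfolding L2[OF m(1)] using c by (intro distr3) auto
    then have "E j * P (Suc m) + ls_a A Es m \<cdot>\<^sub>m (poly (ls_p A Es m) (th j) \<cdot>\<^sub>m (E j * Es 0))
       + ls_x A Es m \<cdot>\<^sub>m (poly (ls_p A Es (m - 1)) (th j) \<cdot>\<^sub>m (E j * Es 0))
       = (th j * poly (ls_p A Es m) (th j)) \<cdot>\<^sub>m (E j * Es 0)"
      using h1 IH1 IH2 by simp
    from solve3[OF _ cF this] c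
    have "E j * P (Suc m) = (th j * poly (ls_p A Es m) (th j) - ls_a A Es m * poly (ls_p A Es m) (th j)
       - ls_x A Es m * poly (ls_p A Es (m - 1)) (th j)) \<cdot>\<^sub>m (E j * Es 0)" by simp
    then show ?thesis using Suc by (simp add: poly_rec)
  qed
qed

lemma L4a:
  assumes "Suc k \<le> d"
  shows "ls_x A Es (Suc k) \<noteq> 0"
proof
  assume x0: "ls_x A Es (Suc k) = 0"
  have k: "k \<le> d" using assms by simp
  have c: "Es k \<in> carrier_mat N N" "Es (Suc k) \<in> carrier_mat N N" using k assms by auto
  have X: "Es k * A * Es (Suc k) \<noteq> 0\<^sub>m N N" using tri1[OF k assms] by simp
  have Y: "Es (Suc k) * A * Es k \<noteq> 0\<^sub>m N N" using tri1[OF assms k] by simp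
  obtain M where M: "M \<in> carrier_mat N N" "(Es k * A * Es (Suc k)) * M * (Es (Suc k) * A * Es k) \<noteq> 0\<^sub>m N N"
    using exists_sandwich_nz[OF _ X _ Y] c by auto
  have "(Es k * A * Es (Suc k)) * M * (Es (Suc k) * A * Es k) = Es k * A * (Es (Suc k) * M * Es (Suc k)) * A * Es k"
    using c M by (simp add: mnorm)
  also have "Es (Suc k) * M * Es (Suc k) = mtrace (Es (Suc k) * M) \<cdot>\<^sub>m Es (Suc k)"
    using M assms by (intro rks) auto
  also have "Es k * A * (mtrace (Es (Suc k) * M) \<cdot>\<^sub>m Es (Suc k)) * A * Es k
     = mtrace (Es (Suc k) * M) \<cdot>\<^sub>m (Es k * (A * Es (Suc k) * A) * Es k)"
    using c M by (simp add: mnorm)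
  also have "Es k * (A * Es (Suc k) * A) * Es k = mtrace (Es k * (A * Es (Suc k) * A)) \<cdot>\<^sub>m Es k"
    using c k by (intro rks) auto
  also have "mtrace (Es k * (A * Es (Suc k) * A)) = mtrace ((Es k * A) * (Es (Suc k) * A))"
    using c by (simp add: mnorm)
  also have "\<dots> = mtrace ((Es (Suc k) * A) * (Es k * A))"
    using c by (intro mtrace_comm[of _ N N]) auto
  also have "\<dots> = ls_x A Es (Suc k)"
    using c by (simp add: ls_x_def mnorm)
  finally show False using M x0 c by (simp add: sm0)
qed

lemma L4: "i \<le> d \<Longrightarrow> P i \<noteq> 0\<^sub>m N N"
proof (induction i)
  case 0 then show ?case using Esnz[of 0] by simp
next
  case (Suc i)
  show ?case
  proof
    assume z: "P (Suc i) = 0\<^sub>m N N"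
    have ci: "Es i \<in> carrier_mat N N" using Suc.prems by simp
    have "Es i * (A * P (Suc i)) = ls_x A Es (Suc i) \<cdot>\<^sub>m P i" using L2b Suc.prems by simp
    moreover have "Es i * (A * P (Suc i)) = 0\<^sub>m N N" using z ci by (simp add: z2)
    ultimately have "ls_x A Es (Suc i) \<cdot>\<^sub>m P i = 0\<^sub>m N N" by simp
    from smult_zero_imp[OF _ _ this] Suc L4a[of i] show False by simp
  qed
qed

lemma L5:
  assumes j: "j \<le> d"
  shows "E j * Es 0 \<noteq> 0\<^sub>m N N"
proof
  assume F0: "E j * Es 0 = 0\<^sub>m N N"
  have "E j = 0\<^sub>m N N"
  proof (rule Escr)
    show "E j \<in> carrier_mat N N" "0\<^sub>m N N \<in> carrier_mat N N" using j by auto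
    fix i assume i: "i \<le> d"
    have EP: "E j * P i = 0\<^sub>m N N" using L3[OF j i] F0 by simp
    obtain M where M: "M \<in> carrier_mat N N" "mtrace (P i * M) \<noteq> 0"
      using exists_trace_nz[of "P i" N] L4[OF i] i by auto
    have c: "P i \<in> carrier_mat N N" "Es i \<in> carrier_mat N N" "E j \<in> carrier_mat N N" using i j by auto
    have "Es i * (P i * M) * Es i = mtrace (Es i * (P i * M)) \<cdot>\<^sub>m Es i"
      using c M i by (intro rks) auto
    moreover have "Es i * (P i * M) = (Es i * P i) * M" using c M i by (simp add: mnorm)
    moreover have "Es i * P i = P i" using i by (rule EsP_self)
    ultimately have h: "P i * M * Es i = mtrace (P i * M) \<cdot>\<^sub>m Es i" by simp
    have "E j * Es i = (1 / mtrace (P i * M)) \<cdot>\<^sub>m (E j * (mtrace (P i * M) \<cdot>\<^sub>m Es i))"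
      using c M by (simp add: sm2 sm3 sm1')
    also have "\<dots> = (1 / mtrace (P i * M)) \<cdot>\<^sub>m ((E j * P i) * M * Es i)"
      unfolding h[symmetric] using c M by (simp add: mnorm)
    also have "\<dots> = 0\<^sub>m N N" unfolding EP using c M by (simp add: z1)
    finally show "E j * Es i = 0\<^sub>m N N * Es i" using c by simp
  qed
  with Enz[OF j] show False by simp
qed

lemma L6:
  assumes i: "i \<le> d" and j: "j \<le> d"
  shows "poly (ls_p A Es i) (th j) * (mtrace (Es 0 * E j) * mtrace (Es i * E 0))
       = poly (ls_p A Es i) (th 0) * mtrace (E 0 * Es 0 * E j * Es i)"
proof -
  define c where "c = mtrace (Es i * E 0)"
  define p where "p = poly (ls_p A Es i) (th j)"
  define q where "q = poly (ls_p A Es i) (th 0)"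
  define t where "t = mtrace (Es 0 * E j)"
  define S where "S = mtrace (E 0 * Es 0 * E j * Es i)"
  have c0: "E 0 \<in> carrier_mat N N" "Es 0 \<in> carrier_mat N N" "E j \<in> carrier_mat N N" "Es i \<in> carrier_mat N N"
    "P i \<in> carrier_mat N N" using i j by auto
  have r1: "Es i * E 0 * Es i = c \<cdot>\<^sub>m Es i" unfolding c_def using c0 i by (intro rks) auto
  have "c \<cdot>\<^sub>m P i = (c \<cdot>\<^sub>m Es i) * P i" using c0 i by (simp add: sm1 EsP_self)
  also have "\<dots> = Es i * E 0 * (Es i * P i)" unfolding r1[symmetric] using c0 by (simp add: mnorm)
  also have "\<dots> = Es i * (E 0 * P i)" using c0 i by (simp add: mnorm EsP_self)
  also have "\<dots> = q \<cdot>\<^sub>m (Es i * E 0 * Es 0)" using c0 i L3[of 0 i] by (simp add: mnorm q_def)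
  finally have a: "c \<cdot>\<^sub>m P i = q \<cdot>\<^sub>m (Es i * E 0 * Es 0)" .
  have r2: "Es 0 * E j * Es 0 = t \<cdot>\<^sub>m Es 0" unfolding t_def using c0 by (intro rks) auto
  have r3: "E 0 * (Es 0 * E j * Es i) * E 0 = S \<cdot>\<^sub>m E 0"
  proof -
    have "E 0 * (Es 0 * E j * Es i) * E 0 = mtrace (E 0 * (Es 0 * E j * Es i)) \<cdot>\<^sub>m E 0"
      using c0 by (intro rk) auto
    moreover have "mtrace (E 0 * (Es 0 * E j * Es i)) = S" unfolding S_def using c0 by (simp add: mnorm)
    ultimately show ?thesis by simp
  qed
  have "(E 0 * Es 0 * E j) * (c \<cdot>\<^sub>m P i) = c \<cdot>\<^sub>m (E 0 * Es 0 * (E j * P i))" using c0 by (simp add: mnorm)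
  also have "\<dots> = (c * p) \<cdot>\<^sub>m (E 0 * (Es 0 * E j * Es 0))" unfolding L3[OF j i] p_def using c0 by (simp add: mnorm)
  also have "\<dots> = (c * p * t) \<cdot>\<^sub>m (E 0 * Es 0)" unfolding r2 using c0 by (simp add: mnorm)
  finally have b1: "(E 0 * Es 0 * E j) * (c \<cdot>\<^sub>m P i) = (c * p * t) \<cdot>\<^sub>m (E 0 * Es 0)" .
  have "(E 0 * Es 0 * E j) * (q \<cdot>\<^sub>m (Es i * E 0 * Es 0)) = q \<cdot>\<^sub>m ((E 0 * (Es 0 * E j * Es i) * E 0) * Es 0)"
    using c0 by (simp add: mnorm)
  also have "\<dots> = (q * S) \<cdot>\<^sub>m (E 0 * Es 0)" unfolding r3 using c0 by (simp add: mnorm)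
  finally have b2: "(E 0 * Es 0 * E j) * (q \<cdot>\<^sub>m (Es i * E 0 * Es 0)) = (q * S) \<cdot>\<^sub>m (E 0 * Es 0)" .
  have "(c * p * t) \<cdot>\<^sub>m (E 0 * Es 0) = (q * S) \<cdot>\<^sub>m (E 0 * Es 0)" using a b1 b2 by simp
  from smult_cancel_mat[OF _ L5[of 0] this] c0 have "c * p * t = q * S" by simp
  then show ?thesis unfolding p_def q_def t_def S_def c_def[symmetric] by (simp add: algebra_simps)
qed

lemma qnz:
  assumes i: "i \<le> d" and T: "\<And>j. j \<le> d \<Longrightarrow> mtrace (Es 0 * E j) * mtrace (Es i * E 0) \<noteq> 0"
  shows "poly (ls_p A Es i) (th 0) \<noteq> 0"
proof
  assume q0: "poly (ls_p A Es i) (th 0) = 0"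
  have "P i = 0\<^sub>m N N"
  proof (rule Ecl)
    show "P i \<in> carrier_mat N N" "0\<^sub>m N N \<in> carrier_mat N N" using i by auto
    fix j assume j: "j \<le> d"
    have "poly (ls_p A Es i) (th j) = 0" using L6[OF i j] q0 T[OF j] by simp
    then show "E j * P i = E j * 0\<^sub>m N N" using L3[OF j i] j cE[OF j] by (simp add: sm0 z2)
  qed
  with L4[OF i] show False by simp
qed

lemma L7:
  assumes a: "a \<le> d" and b: "b \<le> d" and n1: "Es a * E b \<noteq> 0\<^sub>m N N" and n2: "E b * Es a \<noteq> 0\<^sub>m N N"
  shows "mtrace (Es a * E b) \<noteq> 0"
proof
  assume t0: "mtrace (Es a * E b) = 0"
  have c: "Es a \<in> carrier_mat N N" "E b \<in> carrier_mat N N" using a b by auto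
  obtain M where M: "M \<in> carrier_mat N N" "(E b * Es a) * M * (Es a * E b) \<noteq> 0\<^sub>m N N"
    using exists_sandwich_nz[OF _ n2 _ n1] c by auto
  have "(E b * Es a) * M * (Es a * E b) = E b * (Es a * M * Es a) * E b" using c M by (simp add: mnorm)
  also have "Es a * M * Es a = mtrace (Es a * M) \<cdot>\<^sub>m Es a" using a M by (intro rks) auto
  also have "E b * (mtrace (Es a * M) \<cdot>\<^sub>m Es a) * E b = mtrace (Es a * M) \<cdot>\<^sub>m (E b * (Es a) * E b)"
    using c M by (simp add: mnorm)
  also have "E b * (Es a) * E b = mtrace (E b * Es a) \<cdot>\<^sub>m E b" using b c by (intro rk) auto
  also have "mtrace (E b * Es a) = 0" using t0 mtrace_comm[of "E b" N N "Es a"] c by simp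
  finally show False using M c by (simp add: sm0)
qed

end


lemma lsax_dual: "lsax d A As th ths E Es \<Longrightarrow> lsax d As A ths th Es E"
  by (auto simp: lsax_def)

lemma tmult2: "(X :: 'a::field mat) \<in> carrier_mat n n \<Longrightarrow> Y \<in> carrier_mat n n \<Longrightarrow>
  transpose_mat (X * Y) = transpose_mat Y * transpose_mat X"
  by (rule transpose_mult)

lemma tmult3: "(X :: 'a::field mat) \<in> carrier_mat n n \<Longrightarrow> Y \<in> carrier_mat n n \<Longrightarrow> Z \<in> carrier_mat n n \<Longrightarrow>
  transpose_mat (X * Y * Z) = transpose_mat Z * transpose_mat Y * transpose_mat X"
proof -
  assume c: "X \<in> carrier_mat n n" "Y \<in> carrier_mat n n" "Z \<in> carrier_mat n n"
  have "transpose_mat (X * Y * Z) = transpose_mat Z * transpose_mat (X * Y)"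
    using c by (intro transpose_mult) auto
  also have "transpose_mat (X * Y) = transpose_mat Y * transpose_mat X" using c by (intro transpose_mult) auto
  finally show ?thesis using c by (simp add: assoc_mult_mat[of _ n n _ n _ n])
qed

lemma mtrace_tmult: "(X :: 'a::field mat) \<in> carrier_mat n n \<Longrightarrow> Y \<in> carrier_mat n n \<Longrightarrow>
  mtrace (transpose_mat X * transpose_mat Y) = mtrace (X * Y)"
proof -
  assume c: "X \<in> carrier_mat n n" "Y \<in> carrier_mat n n"
  have "transpose_mat X * transpose_mat Y = transpose_mat (Y * X)" using c by (simp add: tmult2)
  then have "mtrace (transpose_mat X * transpose_mat Y) = mtrace (Y * X)"
    using c by (simp add: mtrace_transpose[of _ n])
  also have "\<dots> = mtrace (X * Y)" using c by (intro mtrace_comm[of _ n n]) auto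
  finally show ?thesis .
qed

lemma idem_ax_transpose:
  assumes ax: "idem_ax d (A :: 'a::field mat) th E"
  shows "idem_ax d (transpose_mat A) th (\<lambda>i. transpose_mat (E i))"
proof -
  let ?N = "Suc d"
  have cA: "A \<in> carrier_mat ?N ?N" using ax by (simp add: idem_ax_def)
  have cE: "\<And>i. i \<le> d \<Longrightarrow> E i \<in> carrier_mat ?N ?N" using ax by (simp add: idem_ax_def)
  have EE: "\<And>i j. i \<le> d \<Longrightarrow> j \<le> d \<Longrightarrow> E i * E j = (if i = j then E i else 0\<^sub>m ?N ?N)"
    using ax by (simp add: idem_ax_def)
  have AE: "\<And>i. i \<le> d \<Longrightarrow> A * E i = th i \<cdot>\<^sub>m E i" using ax by (simp add: idem_ax_def)
  have EA: "\<And>i. i \<le> d \<Longrightarrow> E i * A = th i \<cdot>\<^sub>m E i" using ax by (simp add: idem_ax_def)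
  have rk: "\<And>i M. i \<le> d \<Longrightarrow> M \<in> carrier_mat ?N ?N \<Longrightarrow> E i * M * E i = mtrace (E i * M) \<cdot>\<^sub>m E i"
    using ax by (simp add: idem_ax_def)
  have nz: "\<And>i. i \<le> d \<Longrightarrow> E i \<noteq> 0\<^sub>m ?N ?N" using ax by (simp add: idem_ax_def)
  have cl: "\<forall>X\<in>carrier_mat ?N ?N. \<forall>Y\<in>carrier_mat ?N ?N. (\<forall>i\<le>d. E i * X = E i * Y) \<longrightarrow> X = Y"
    using ax unfolding idem_ax_def by (elim conjE) assumption+
  have cr: "\<forall>X\<in>carrier_mat ?N ?N. \<forall>Y\<in>carrier_mat ?N ?N. (\<forall>i\<le>d. X * E i = Y * E i) \<longrightarrow> X = Y"
    using ax unfolding idem_ax_def by (elim conjE) assumption+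
  show ?thesis unfolding idem_ax_def
  proof (intro conjI allI impI ballI)
    show "transpose_mat A \<in> carrier_mat ?N ?N" using cA by simp
    fix i assume i: "i \<le> d"
    show "transpose_mat (E i) \<in> carrier_mat ?N ?N" using cE[OF i] by simp
    show "transpose_mat A * transpose_mat (E i) = th i \<cdot>\<^sub>m transpose_mat (E i)"
      using cA cE[OF i] EA[OF i] by (simp add: tmult2[symmetric] transpose_smult)
    show "transpose_mat (E i) * transpose_mat A = th i \<cdot>\<^sub>m transpose_mat (E i)"
      using cA cE[OF i] AE[OF i] by (simp add: tmult2[symmetric] transpose_smult)
    show "transpose_mat (E i) \<noteq> 0\<^sub>m ?N ?N"
    proof
      assume "transpose_mat (E i) = 0\<^sub>m ?N ?N"
      then have "E i = 0\<^sub>m ?N ?N" by (metis transpose_transpose transpose_zero)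
      with nz[OF i] show False by simp
    qed
    {
      fix j assume j: "j \<le> d"
      show "transpose_mat (E i) * transpose_mat (E j) = (if i = j then transpose_mat (E i) else 0\<^sub>m ?N ?N)"
        using cE[OF i] cE[OF j] EE[OF j i] by (simp add: tmult2[symmetric] transpose_zero)
    }
    {
      fix M :: "'a mat" assume M: "M \<in> carrier_mat ?N ?N"
      have "transpose_mat (E i * transpose_mat M * E i) = transpose_mat (E i) * transpose_mat (transpose_mat M) * transpose_mat (E i)"
        using M by (intro tmult3[OF cE[OF i] _ cE[OF i]]) simp
      then have "transpose_mat (E i) * M * transpose_mat (E i) = transpose_mat (E i * transpose_mat M * E i)"
        by simp
      also have "\<dots> = mtrace (E i * transpose_mat M) \<cdot>\<^sub>m transpose_mat (E i)"
        using rk[OF i, of "transpose_mat M"] M by (simp add: transpose_smult)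
      also have "mtrace (E i * transpose_mat M) = mtrace (transpose_mat (E i) * M)"
        using mtrace_tmult[of "transpose_mat (E i)" ?N M] cE[OF i] M by simp
      finally show "transpose_mat (E i) * M * transpose_mat (E i) = mtrace (transpose_mat (E i) * M) \<cdot>\<^sub>m transpose_mat (E i)" .
    }
  next
    fix X Y :: "'a mat" assume X: "X \<in> carrier_mat ?N ?N" and Y: "Y \<in> carrier_mat ?N ?N"
    {
      assume h: "\<forall>i\<le>d. transpose_mat (E i) * X = transpose_mat (E i) * Y"
      have "\<forall>i\<le>d. transpose_mat X * E i = transpose_mat Y * E i"
      proof (intro allI impI)
        fix i assume i: "i \<le> d"
        have "transpose_mat (transpose_mat X * E i) = transpose_mat (transpose_mat Y * E i)"
          using h i X Y cE[OF i] by (simp add: tmult2)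
        then show "transpose_mat X * E i = transpose_mat Y * E i" by (rule transpose_inj)
      qed
      then have "transpose_mat X = transpose_mat Y" using cr[rule_format, of "transpose_mat X" "transpose_mat Y"] X Y by auto
      then show "X = Y" by (rule transpose_inj)
    }
    {
      assume h: "\<forall>i\<le>d. X * transpose_mat (E i) = Y * transpose_mat (E i)"
      have "\<forall>i\<le>d. E i * transpose_mat X = E i * transpose_mat Y"
      proof (intro allI impI)
        fix i assume i: "i \<le> d"
        have "transpose_mat (E i * transpose_mat X) = transpose_mat (E i * transpose_mat Y)"
          using h i X Y cE[OF i] by (simp add: tmult2)
        then show "E i * transpose_mat X = E i * transpose_mat Y" by (rule transpose_inj)
      qed
      then have "transpose_mat X = transpose_mat Y" using cl[rule_format, of "transpose_mat X" "transpose_mat Y"] X Y by auto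
      then show "X = Y" by (rule transpose_inj)
    }
  qed
qed

lemma tridiag_transpose:
  assumes t: "tridiag_cond d E (B :: 'a::field mat)" and cB: "B \<in> carrier_mat (Suc d) (Suc d)"
    and cE: "\<And>i. i \<le> d \<Longrightarrow> E i \<in> carrier_mat (Suc d) (Suc d)"
  shows "tridiag_cond d (\<lambda>i. transpose_mat (E i)) (transpose_mat B)"
  unfolding tridiag_cond_def
proof (intro allI impI)
  fix i j assume i: "i \<le> d" and j: "j \<le> d"
  have eq: "transpose_mat (E i) * transpose_mat B * transpose_mat (E j) = transpose_mat (E j * B * E i)"
    by (rule tmult3[OF cE[OF j] cB cE[OF i], symmetric])
  have iff: "transpose_mat (E j * B * E i) = 0\<^sub>m (Suc d) (Suc d) \<longleftrightarrow> E j * B * E i = 0\<^sub>m (Suc d) (Suc d)"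
    by (metis transpose_transpose transpose_zero)
  have tj: "(Suc j < i \<or> Suc i < j \<longrightarrow> E j * B * E i = 0\<^sub>m (Suc d) (Suc d)) \<and>
      (Suc j = i \<or> Suc i = j \<longrightarrow> E j * B * E i \<noteq> 0\<^sub>m (Suc d) (Suc d))"
    using t i j unfolding tridiag_cond_def by simp
  show "(Suc i < j \<or> Suc j < i \<longrightarrow> transpose_mat (E i) * transpose_mat B * transpose_mat (E j) = 0\<^sub>m (Suc d) (Suc d)) \<and>
    (Suc i = j \<or> Suc j = i \<longrightarrow> transpose_mat (E i) * transpose_mat B * transpose_mat (E j) \<noteq> 0\<^sub>m (Suc d) (Suc d))"
    using tj eq iff by auto
qed

lemma lsax_transpose:
  assumes "lsax d A As th ths E Es"
  shows "lsax d (transpose_mat A) (transpose_mat As) th ths (\<lambda>i. transpose_mat (E i)) (\<lambda>i. transpose_mat (Es i))"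
proof -
  have i1: "idem_ax d A th E" and i2: "idem_ax d As ths Es" and t1: "tridiag_cond d E As" and t2: "tridiag_cond d Es A"
    using assms by (auto simp: lsax_def)
  show ?thesis unfolding lsax_def
    using idem_ax_transpose[OF i1] idem_ax_transpose[OF i2]
      tridiag_transpose[OF t1] tridiag_transpose[OF t2] i1 i2 by (simp add: idem_ax_def)
qed

lemma lpoly_cong:
  "(\<And>k. k \<le> i \<Longrightarrow> a k = a' k) \<Longrightarrow> (\<And>k. k \<le> i \<Longrightarrow> x k = x' k) \<Longrightarrow> lpoly a x i = lpoly a' x' i"
proof (induction a x i rule: lpoly.induct)
  case (1 a x) then show ?case by simp
next
  case (2 a x) then show ?case by simp
next
  case (3 a x i)
  have "lpoly a x (Suc i) = lpoly a' x' (Suc i)" using 3 by simp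
  moreover have "lpoly a x i = lpoly a' x' i" using 3 by simp
  ultimately show ?case using "3.prems" by simp
qed

lemma ls_p_transpose:
  assumes "lsax d A As th ths E Es" "i \<le> d"
  shows "ls_p (transpose_mat A) (\<lambda>k. transpose_mat (Es k)) i = ls_p A Es i"
proof -
  interpret O: LSA d A As th ths E Es by (unfold_locales) (rule assms(1))
  show ?thesis unfolding ls_p_def
  proof (rule lpoly_cong)
    fix k assume k: "k \<le> i"
    then have kd: "k \<le> d" using assms by simp
    show "ls_a (transpose_mat A) (\<lambda>k. transpose_mat (Es k)) k = ls_a A Es k"
      unfolding ls_a_def using mtrace_tmult[of "Es k" "Suc d" A] kd by simp
    show "ls_x (transpose_mat A) (\<lambda>k. transpose_mat (Es k)) k = ls_x A Es k"
    proof (cases "k = 0")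
      case True then show ?thesis by (simp add: ls_x_def)
    next
      case False
      have c: "Es k \<in> carrier_mat (Suc d) (Suc d)" "Es (k - 1) \<in> carrier_mat (Suc d) (Suc d)"
        using kd by auto
      have h1: "transpose_mat ((A * Es (k - 1) * A) * Es k) = transpose_mat (Es k) * transpose_mat (A * Es (k - 1) * A)"
        using c by (intro tmult2) auto
      have h2: "transpose_mat (A * Es (k - 1) * A) = transpose_mat A * transpose_mat (Es (k - 1)) * transpose_mat A"
        using c by (intro tmult3) auto
      have "transpose_mat (Es k) * transpose_mat A * transpose_mat (Es (k - 1)) * transpose_mat A
          = transpose_mat (A * Es (k - 1) * A * Es k)"
        unfolding h1 h2 using c by (simp add: O.mnorm)
      then have "mtrace (transpose_mat (Es k) * transpose_mat A * transpose_mat (Es (k - 1)) * transpose_mat A)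
          = mtrace ((A * Es (k - 1) * A) * Es k)"
        using c by (simp add: mtrace_transpose[of _ "Suc d"])
      also have "\<dots> = mtrace (Es k * (A * Es (k - 1) * A))"
        using c by (intro mtrace_comm[of _ "Suc d" "Suc d"]) auto
      also have "\<dots> = mtrace (Es k * A * Es (k - 1) * A)"
        using c by (simp add: O.mnorm)
      finally show ?thesis using False by (simp add: ls_x_def)
    qed
  qed
qed



lemma main_abstract:
  assumes ax: "lsax d A As th ths E Es" and i: "i \<le> d" and j: "j \<le> d"
  shows "ls_u A Es th i (th j) = ls_u As E ths j (ths i)"
proof -
  let ?T = "transpose_mat"
  interpret O: LSA d A As th ths E Es by unfold_locales (rule ax)
  interpret D: LSA d As A ths th Es E by unfold_locales (rule lsax_dual[OF ax])
  interpret T: LSA d "?T A" "?T As" th ths "\<lambda>k. ?T (E k)" "\<lambda>k. ?T (Es k)"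
    by unfold_locales (rule lsax_transpose[OF ax])
  interpret DT: LSA d "?T As" "?T A" ths th "\<lambda>k. ?T (Es k)" "\<lambda>k. ?T (E k)"
    by unfold_locales (rule lsax_dual[OF lsax_transpose[OF ax]])
  have n1: "\<And>k. k \<le> d \<Longrightarrow> E k * Es 0 \<noteq> 0\<^sub>m O.N O.N" by (rule O.L5)
  have n2: "\<And>k. k \<le> d \<Longrightarrow> Es k * E 0 \<noteq> 0\<^sub>m O.N O.N" by (rule D.L5)
  have n3: "Es 0 * E k \<noteq> 0\<^sub>m O.N O.N" if k: "k \<le> d" for k
  proof
    assume "Es 0 * E k = 0\<^sub>m O.N O.N"
    then have "?T (Es 0 * E k) = 0\<^sub>m O.N O.N" by (simp add: transpose_zero)
    moreover have "?T (Es 0 * E k) = ?T (E k) * ?T (Es 0)" using k by (intro tmult2[of _ "Suc d"]) auto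
    ultimately show False using T.L5[OF k] by simp
  qed
  have n4: "E 0 * Es k \<noteq> 0\<^sub>m O.N O.N" if k: "k \<le> d" for k
  proof
    assume "E 0 * Es k = 0\<^sub>m O.N O.N"
    then have "?T (E 0 * Es k) = 0\<^sub>m O.N O.N" by (simp add: transpose_zero)
    moreover have "?T (E 0 * Es k) = ?T (Es k) * ?T (E 0)" using k by (intro tmult2[of _ "Suc d"]) auto
    ultimately show False using DT.L5[OF k] by simp
  qed
  have t1: "\<And>k. k \<le> d \<Longrightarrow> mtrace (Es 0 * E k) \<noteq> 0" using O.L7 n1 n3 by auto
  have t2: "\<And>k. k \<le> d \<Longrightarrow> mtrace (Es k * E 0) \<noteq> 0" using O.L7 n2 n4 by auto
  have t1': "\<And>k. k \<le> d \<Longrightarrow> mtrace (E k * Es 0) \<noteq> 0"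
    using t1 mtrace_comm[of "E _" O.N O.N "Es 0"] by auto
  have t2': "\<And>k. k \<le> d \<Longrightarrow> mtrace (E 0 * Es k) \<noteq> 0"
    using t2 mtrace_comm[of "E 0" O.N O.N "Es _"] by auto
  define S where "S = mtrace (Es 0 * E 0 * Es i * E j)"
  define TT where "TT = mtrace (Es 0 * E j) * mtrace (Es i * E 0)"
  have TT0: "TT \<noteq> 0" unfolding TT_def using t1[OF j] t2[OF i] by simp
  have q0: "poly (ls_p A Es i) (th 0) \<noteq> 0" using O.qnz[OF i] t1 t2[OF i] by simp
  have q0': "poly (ls_p As E j) (ths 0) \<noteq> 0" using D.qnz[OF j] t2' t1'[OF j] by simp
  have rT: "poly (ls_p (?T A) (\<lambda>k. ?T (Es k)) i) (th j) *
      (mtrace (?T (Es 0) * ?T (E j)) * mtrace (?T (Es i) * ?T (E 0)))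
      = poly (ls_p (?T A) (\<lambda>k. ?T (Es k)) i) (th 0) * mtrace (?T (E 0) * ?T (Es 0) * ?T (E j) * ?T (Es i))"
    by (rule T.L6[OF i j])
  have e1: "mtrace (?T (Es 0) * ?T (E j)) = mtrace (Es 0 * E j)" using j by (intro mtrace_tmult[of _ "Suc d"]) auto
  have e2: "mtrace (?T (Es i) * ?T (E 0)) = mtrace (Es i * E 0)" using i by (intro mtrace_tmult[of _ "Suc d"]) auto
  have e3: "mtrace (?T (E 0) * ?T (Es 0) * ?T (E j) * ?T (Es i)) = S"
  proof -
    have c: "E 0 \<in> carrier_mat O.N O.N" "Es 0 \<in> carrier_mat O.N O.N" "E j \<in> carrier_mat O.N O.N"
      "Es i \<in> carrier_mat O.N O.N" using i j by auto
    have "?T (E 0) * ?T (Es 0) * ?T (E j) * ?T (Es i) = ?T (Es 0 * E 0) * ?T (Es i * E j)"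
      using c by (simp add: tmult2[of _ "Suc d"] O.mnorm)
    also have "\<dots> = ?T ((Es i * E j) * (Es 0 * E 0))" using c by (simp add: tmult2[of _ "Suc d"])
    finally have "mtrace (?T (E 0) * ?T (Es 0) * ?T (E j) * ?T (Es i)) = mtrace ((Es i * E j) * (Es 0 * E 0))"
      using c by (simp add: mtrace_transpose[of _ O.N])
    also have "\<dots> = mtrace ((Es 0 * E 0) * (Es i * E j))" using c by (intro mtrace_comm[of _ O.N O.N]) auto
    also have "\<dots> = S" unfolding S_def using c by (simp add: O.mnorm)
    finally show ?thesis .
  qed
  have rO: "poly (ls_p A Es i) (th j) * TT = poly (ls_p A Es i) (th 0) * S"
    using rT unfolding e1 e2 e3 ls_p_transpose[OF ax i] TT_def .
  have rD: "poly (ls_p As E j) (ths i) * (mtrace (E 0 * Es i) * mtrace (E j * Es 0))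
      = poly (ls_p As E j) (ths 0) * mtrace (Es 0 * E 0 * Es i * E j)"
    by (rule D.L6[OF j i])
  have f1: "mtrace (E 0 * Es i) = mtrace (Es i * E 0)" using i by (intro mtrace_comm[of _ O.N O.N]) auto
  have f2: "mtrace (E j * Es 0) = mtrace (Es 0 * E j)" using j by (intro mtrace_comm[of _ O.N O.N]) auto
  have rD': "poly (ls_p As E j) (ths i) * TT = poly (ls_p As E j) (ths 0) * S"
    using rD unfolding f1 f2 S_def TT_def by (simp add: mult.commute)
  have "ls_u A Es th i (th j) = S / TT" unfolding ls_u_def using rO q0 TT0 by (simp add: frac_eq_eq)
  moreover have "ls_u As E ths j (ths i) = S / TT" unfolding ls_u_def using rD' q0' TT0 by (simp add: frac_eq_eq)
  ultimately show ?thesis by simp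
qed



lemma unitm_mult_index:
  fixes Z :: "'a::comm_ring_1 mat"
  assumes "Z \<in> carrier_mat n m" "r < n" "s < m" "b < n"
  shows "(unitm n a b * Z) $$ (r,s) = (if r = a then Z $$ (b,s) else 0)"
proof -
  have "(unitm n a b * Z) $$ (r,s) = (\<Sum>k<n. (if r = a \<and> k = b then 1 else 0) * Z $$ (k,s))"
    using assms by (simp add: unitm_def scalar_prod_def atLeast0LessThan)
  also have "\<dots> = (\<Sum>k<n. if k = b then (if r = a then Z $$ (k,s) else 0) else 0)"
    by (rule sum.cong) auto
  also have "\<dots> = (if r = a then Z $$ (b,s) else 0)"
    using assms by (simp add: sum.delta)
  finally show ?thesis .
qed

lemma mult_zero_vec: "(M :: 'a::comm_ring_1 mat) \<in> carrier_mat n m \<Longrightarrow> M *\<^sub>v 0\<^sub>v m = 0\<^sub>v n"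
  by (rule eq_vecI) (auto simp: scalar_prod_def)

lemma zero_mult_vec: "v \<in> carrier_vec m \<Longrightarrow> 0\<^sub>m n m *\<^sub>v v = (0\<^sub>v n :: 'a::comm_ring_1 vec)"
  by (rule eq_vecI) (auto simp: scalar_prod_def)

lemma smult_mat_vec: "(M :: 'a::comm_ring_1 mat) \<in> carrier_mat n m \<Longrightarrow> v \<in> carrier_vec m \<Longrightarrow>
   (c \<cdot>\<^sub>m M) *\<^sub>v v = c \<cdot>\<^sub>v (M *\<^sub>v v)"
  by (rule eq_vecI) (auto simp: scalar_prod_def sum_distrib_left ac_simps)

lemma eig_factor:
  fixes A :: "'a::field mat"
  assumes A: "A \<in> carrier_mat n n" and v: "v \<in> carrier_vec n" and Av: "A *\<^sub>v v = t \<cdot>\<^sub>v v"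
  shows "(c \<cdot>\<^sub>m (A - s \<cdot>\<^sub>m 1\<^sub>m n)) *\<^sub>v v = (c * (t - s)) \<cdot>\<^sub>v v"
proof -
  have "(A - s \<cdot>\<^sub>m 1\<^sub>m n) *\<^sub>v v = A *\<^sub>v v - (s \<cdot>\<^sub>m 1\<^sub>m n) *\<^sub>v v"
    using A v by (intro minus_mult_distrib_mat_vec) auto
  also have "(s \<cdot>\<^sub>m 1\<^sub>m n) *\<^sub>v v = s \<cdot>\<^sub>v v" using v by (simp add: smult_mat_vec[of _ n n])
  finally have "(A - s \<cdot>\<^sub>m 1\<^sub>m n) *\<^sub>v v = t \<cdot>\<^sub>v v - s \<cdot>\<^sub>v v" using Av by simp
  then have "(A - s \<cdot>\<^sub>m 1\<^sub>m n) *\<^sub>v v = (t - s) \<cdot>\<^sub>v v"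
    using v by (auto simp: algebra_simps intro!: eq_vecI)
  moreover have "(A - s \<cdot>\<^sub>m 1\<^sub>m n) \<in> carrier_mat n n" by (rule minus_carrier_mat) simp
  ultimately show ?thesis using smult_mat_vec[OF _ v, of "A - s \<cdot>\<^sub>m 1\<^sub>m n" n c] by (simp add: smult_smult_assoc)
qed

lemma mlp_carrier: "(\<And>M. M \<in> set Ms \<Longrightarrow> M \<in> carrier_mat n n) \<Longrightarrow> mat_list_prod n Ms \<in> carrier_mat n n"
proof (induction Ms)
  case Nil then show ?case by simp
next
  case (Cons M Ms)
  then have "M \<in> carrier_mat n n" "mat_list_prod n Ms \<in> carrier_mat n n" by auto
  then show ?case by (simp add: mult_carrier_mat[of M n n _ n])
qed

lemma mlp_vec:
  fixes G :: "nat \<Rightarrow> 'a::field mat"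
  assumes "\<And>j. j \<in> set js \<Longrightarrow> G j \<in> carrier_mat n n \<and> G j *\<^sub>v v = g j \<cdot>\<^sub>v v" and v: "v \<in> carrier_vec n"
  shows "mat_list_prod n (map G js) *\<^sub>v v = prod_list (map g js) \<cdot>\<^sub>v v"
  using assms(1)
proof (induction js)
  case Nil then show ?case using v by auto
next
  case (Cons j js)
  have c: "mat_list_prod n (map G js) \<in> carrier_mat n n" using Cons.prems by (intro mlp_carrier) auto
  have Gj: "G j \<in> carrier_mat n n" "G j *\<^sub>v v = g j \<cdot>\<^sub>v v" using Cons.prems by auto
  have "mat_list_prod n (map G (j # js)) *\<^sub>v v = G j *\<^sub>v (mat_list_prod n (map G js) *\<^sub>v v)"
    using c Gj v by simp
  also have "\<dots> = G j *\<^sub>v (prod_list (map g js) \<cdot>\<^sub>v v)" using Cons by simp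
  also have "\<dots> = prod_list (map g js) \<cdot>\<^sub>v (g j \<cdot>\<^sub>v v)" using Gj v by (simp add: mult_mat_vec)
  also have "\<dots> = prod_list (map g (j # js)) \<cdot>\<^sub>v v" by (simp add: smult_smult_assoc mult.commute)
  finally show ?case .
qed

lemma mlp_comm:
  fixes A :: "'a::field mat"
  assumes A: "A \<in> carrier_mat n n" and "\<And>M. M \<in> set Ms \<Longrightarrow> M \<in> carrier_mat n n \<and> M * A = A * M"
  shows "mat_list_prod n Ms * A = A * mat_list_prod n Ms"
  using assms(2)
proof (induction Ms)
  case Nil then show ?case using A by simp
next
  case (Cons M Ms)
  have c: "mat_list_prod n Ms \<in> carrier_mat n n" using Cons.prems by (intro mlp_carrier) auto
  have M: "M \<in> carrier_mat n n" "M * A = A * M" using Cons.prems by auto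
  have "mat_list_prod n (M # Ms) * A = M * (mat_list_prod n Ms * A)" using c M A by simp
  also have "\<dots> = M * (A * mat_list_prod n Ms)" using Cons by simp
  also have "\<dots> = (M * A) * mat_list_prod n Ms" by (rule assoc_mult_mat[symmetric]) (use c M A in auto)
  also have "\<dots> = (A * M) * mat_list_prod n Ms" by (simp only: M(2))
  also have "\<dots> = A * (M * mat_list_prod n Ms)" by (rule assoc_mult_mat) (use c M A in auto)
  also have "\<dots> = A * mat_list_prod n (M # Ms)" by simp
  finally show ?case .
qed



lemma prod_list_ones: "(\<And>x. x \<in> set xs \<Longrightarrow> g x = (1::'a::comm_monoid_mult)) \<Longrightarrow> prod_list (map g xs) = 1"
  by (induction xs) auto

lemma prod_list_zero: "x \<in> set xs \<Longrightarrow> g x = (0::'a::comm_semiring_1) \<Longrightarrow> prod_list (map g xs) = 0"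
  by (induction xs) auto

lemma smult_zero_vec': "(c :: 'a::comm_ring_1) \<cdot>\<^sub>v 0\<^sub>v n = 0\<^sub>v n" by (rule eq_vecI) auto
lemma zero_smult_vec': "v \<in> carrier_vec n \<Longrightarrow> (0 :: 'a::comm_ring_1) \<cdot>\<^sub>v v = 0\<^sub>v n" by (rule eq_vecI) auto

lemma unitm_sandwich:
  fixes Z :: "'a::comm_ring_1 mat"
  assumes Z: "Z \<in> carrier_mat n n" and i: "i < n"
  shows "unitm n i i * Z * unitm n i i = Z $$ (i,i) \<cdot>\<^sub>m unitm n i i"
proof (rule eq_matI)
  fix r s assume rs: "r < dim_row (Z $$ (i,i) \<cdot>\<^sub>m unitm n i i)" "s < dim_col (Z $$ (i,i) \<cdot>\<^sub>m unitm n i i)"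
  then have rs': "r < n" "s < n" by auto
  have c: "unitm n i i * Z \<in> carrier_mat n n" using Z by (simp add: mult_carrier_mat[of _ n n _ n])
  have "(unitm n i i * Z * unitm n i i) $$ (r,s) = (if s = i then (unitm n i i * Z) $$ (r,i) else 0)"
    by (rule mult_unitm_index[OF c rs' i])
  also have "\<dots> = (if s = i then (if r = i then Z $$ (i,i) else 0) else 0)"
    using unitm_mult_index[OF Z rs'(1) i i, of i] by simp
  also have "\<dots> = (Z $$ (i,i) \<cdot>\<^sub>m unitm n i i) $$ (r,s)" using rs' by (auto simp: unitm_def)
  finally show "(unitm n i i * Z * unitm n i i) $$ (r,s) = (Z $$ (i,i) \<cdot>\<^sub>m unitm n i i) $$ (r,s)" .
qed (use Z in auto)

lemma mtrace_unitm:
  fixes Z :: "'a::comm_ring_1 mat"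
  assumes Z: "Z \<in> carrier_mat n n" and i: "i < n"
  shows "mtrace (unitm n i i * Z) = Z $$ (i,i)"
proof -
  have h: "r < n \<Longrightarrow> (unitm n i i * Z) $$ (r,r) = (if r = i then Z $$ (i,r) else 0)" for r
    using unitm_mult_index[OF Z _ _ i, of r r i] by simp
  have "mtrace (unitm n i i * Z) = (\<Sum>r<n. if r = i then Z $$ (i,r) else 0)"
    unfolding mtrace_def by (simp del: index_mult_mat add: h index_mult_mat(2,3))
  also have "\<dots> = Z $$ (i,i)" using i by (simp add: sum.delta)
  finally show ?thesis .
qed

locale CONC =
  fixes d :: nat and A :: "'a::field mat" and th :: "nat \<Rightarrow> 'a" and E :: "nat \<Rightarrow> 'a mat"
  assumes cA[simp]: "A \<in> carrier_mat (Suc d) (Suc d)" and inj: "inj_on th {..d}"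
    and ev: "\<And>i. i \<le> d \<Longrightarrow> eigenvalue A (th i)"
    and Edef: "\<And>i. i \<le> d \<Longrightarrow> E i = prim_idem d A th i"
begin

declare assoc_mult_mat[simp del]

abbreviation "N \<equiv> Suc d"

lemma mc[simp]: "X \<in> carrier_mat N N \<Longrightarrow> Y \<in> carrier_mat N N \<Longrightarrow> X * Y \<in> carrier_mat N N"
  by (rule mult_carrier_mat)
lemma massoc: "X \<in> carrier_mat N N \<Longrightarrow> Y \<in> carrier_mat N N \<Longrightarrow> Z \<in> carrier_mat N N \<Longrightarrow> X * Y * Z = X * (Y * Z)"
  by (rule assoc_mult_mat)
lemma sm1: "(X :: 'a mat) \<in> carrier_mat N N \<Longrightarrow> Y \<in> carrier_mat N N \<Longrightarrow> (c \<cdot>\<^sub>m X) * Y = c \<cdot>\<^sub>m (X * Y)"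
  by (rule mult_smult_assoc_mat)
lemma sm2: "(X :: 'a mat) \<in> carrier_mat N N \<Longrightarrow> Y \<in> carrier_mat N N \<Longrightarrow> X * (c \<cdot>\<^sub>m Y) = c \<cdot>\<^sub>m (X * Y)"
  by (rule mult_smult_distrib)
lemmas mnorm = massoc sm1 sm2

definition vv :: "nat \<Rightarrow> 'a vec" where "vv k = (SOME v. eigenvector A v (th k))"

lemma vv: assumes "k \<le> d" shows "vv k \<in> carrier_vec N" "vv k \<noteq> 0\<^sub>v N" "A *\<^sub>v vv k = th k \<cdot>\<^sub>v vv k"
proof -
  have "\<exists>v. eigenvector A v (th k)" using ev[OF assms] by (simp add: eigenvalue_def)
  then have "eigenvector A (vv k) (th k)" unfolding vv_def by (rule someI_ex)
  moreover have "dim_row A = N" using carrier_matD(1)[OF cA] .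
  ultimately show "vv k \<in> carrier_vec N" "vv k \<noteq> 0\<^sub>v N" "A *\<^sub>v vv k = th k \<cdot>\<^sub>v vv k"
    by (auto simp: eigenvector_def)
qed

lemma cF[simp]: "(c \<cdot>\<^sub>m (A - s \<cdot>\<^sub>m 1\<^sub>m N)) \<in> carrier_mat N N"
proof -
  have "A - s \<cdot>\<^sub>m 1\<^sub>m N \<in> carrier_mat N N" by (rule minus_carrier_mat) simp
  then show ?thesis by simp
qed

lemma cE[simp]: "i \<le> d \<Longrightarrow> E i \<in> carrier_mat N N"
  unfolding Edef prim_idem_def by (rule mlp_carrier) (auto simp del: upt_Suc)

lemma E_vv: assumes i: "i \<le> d" and k: "k \<le> d"
  shows "E i *\<^sub>v vv k = (if k = i then vv k else 0\<^sub>v N)"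
proof -
  let ?g = "\<lambda>j. (1 / (th i - th j)) * (th k - th j)"
  have "E i *\<^sub>v vv k = prod_list (map ?g (filter (\<lambda>j. j \<noteq> i) [0..<N])) \<cdot>\<^sub>v vv k"
    unfolding Edef[OF i] prim_idem_def
  proof (rule mlp_vec[OF _ vv(1)[OF k]])
    fix j assume "j \<in> set (filter (\<lambda>j. j \<noteq> i) [0..<N])"
    show "(1 / (th i - th j)) \<cdot>\<^sub>m (A - th j \<cdot>\<^sub>m 1\<^sub>m N) \<in> carrier_mat N N \<and>
      (1 / (th i - th j)) \<cdot>\<^sub>m (A - th j \<cdot>\<^sub>m 1\<^sub>m N) *\<^sub>v vv k = ?g j \<cdot>\<^sub>v vv k"
      using eig_factor[OF cA vv(1)[OF k] vv(3)[OF k]] by simp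
  qed
  also have "\<dots> = (if k = i then vv k else 0\<^sub>v N)"
  proof (cases "k = i")
    case True
    have p1: "prod_list (map ?g (filter (\<lambda>j. j \<noteq> i) [0..<N])) = 1"
    proof (rule prod_list_ones)
      fix j assume "j \<in> set (filter (\<lambda>j. j \<noteq> i) [0..<N])"
      then have "j \<noteq> i" "j \<le> d" by (auto simp del: upt_Suc)
      then have "th i \<noteq> th j" using inj i unfolding inj_on_def by auto
      then show "?g j = 1" using True by simp
    qed
    show ?thesis unfolding p1 using True vv(1)[OF k] by simp
  next
    case False
    have p0: "prod_list (map ?g (filter (\<lambda>j. j \<noteq> i) [0..<N])) = 0"
      by (rule prod_list_zero[of k]) (use False k in \<open>auto simp del: upt_Suc\<close>)
    show ?thesis unfolding p0 using False zero_smult_vec'[OF vv(1)[OF k]] by simp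
  qed
  finally show ?thesis .
qed

definition V :: "'a mat" where "V = mat N N (\<lambda>(r,c). vv c $ r)"

lemma cV[simp]: "V \<in> carrier_mat N N" by (simp add: V_def)
lemma dimV[simp]: "dim_row V = N" "dim_col V = N" by (simp_all add: V_def)

lemma multV: assumes X: "X \<in> carrier_mat N N" and r: "r < N" and k: "k < N"
  shows "(X * V) $$ (r,k) = (X *\<^sub>v vv k) $ r"
proof -
  have kd: "k \<le> d" using k by simp
  have cv: "dim_vec (vv k) = N" using vv(1)[OF kd] by simp
  have "col V k = vv k"
  proof (rule eq_vecI)
    fix r assume "r < dim_vec (vv k)"
    then have "r < N" using cv by simp
    then show "col V k $ r = vv k $ r" using k by (simp add: V_def)
  next
    show "dim_vec (col V k) = dim_vec (vv k)" using cv by simp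
  qed
  then show ?thesis using X r k by (simp add: V_def)
qed

lemma E_V: assumes i: "i \<le> d" shows "E i * V = V * unitm N i i"
proof (rule eq_matI)
  fix r k assume rk: "r < dim_row (V * unitm N i i)" "k < dim_col (V * unitm N i i)"
  then have rk': "r < N" "k < N" by auto
  have "(E i * V) $$ (r,k) = (E i *\<^sub>v vv k) $ r" using multV[OF cE[OF i] rk'] .
  also have "\<dots> = (if k = i then vv i $ r else 0)" using E_vv[OF i, of k] rk' by auto
  also have "\<dots> = (V * unitm N i i) $$ (r,k)"
    using mult_unitm_index[OF cV rk' _, of i i] i rk' by (simp add: V_def)
  finally show "(E i * V) $$ (r,k) = (V * unitm N i i) $$ (r,k)" .
next
  show "dim_row (E i * V) = dim_row (V * unitm N i i)" using cE[OF i] by simp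
  show "dim_col (E i * V) = dim_col (V * unitm N i i)" by simp
qed

lemma V_det: "det V \<noteq> 0"
proof
  assume "det V = 0"
  then obtain w where w: "w \<in> carrier_vec N" "w \<noteq> 0\<^sub>v N" "V *\<^sub>v w = 0\<^sub>v N"
    using det_0_iff_vec_prod_zero_field[OF cV] by auto
  have "w = 0\<^sub>v N"
  proof (rule eq_vecI)
    fix i assume "i < dim_vec (0\<^sub>v N :: 'a vec)"
    then have i: "i \<le> d" by simp
    have cU: "V * unitm N i i \<in> carrier_mat N N" by simp
    have "(V * unitm N i i) *\<^sub>v w = (E i * V) *\<^sub>v w" using E_V[OF i] by simp
    also have "\<dots> = E i *\<^sub>v (V *\<^sub>v w)" using i w by (intro assoc_mult_mat_vec[of _ N N _ N]) auto
    also have "\<dots> = 0\<^sub>v N" using w i by (simp add: mult_zero_vec[of _ N N])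
    finally have z: "(V * unitm N i i) *\<^sub>v w = 0\<^sub>v N" .
    obtain r where r: "r < N" "vv i $ r \<noteq> 0"
    proof -
      have "\<exists>r<N. vv i $ r \<noteq> 0"
      proof (rule ccontr)
        assume "\<not> ?thesis"
        then have "vv i = 0\<^sub>v N" using vv(1)[OF i] by (auto intro!: eq_vecI)
        with vv(2)[OF i] show False by simp
      qed
      then show ?thesis using that by blast
    qed
    have "((V * unitm N i i) *\<^sub>v w) $ r = row (V * unitm N i i) r \<bullet> w"
      using r by simp
    also have "\<dots> = (\<Sum>s<N. (V * unitm N i i) $$ (r,s) * w $ s)"
      unfolding scalar_prod_def using w r
      by (intro sum.cong) (auto simp del: index_mult_mat simp: index_mult_mat(2,3) atLeast0LessThan)
    also have "\<dots> = (\<Sum>s<N. if s = i then vv i $ r * w $ s else 0)"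
      using mult_unitm_index[OF cV r(1) _, of _ i i] i r by (intro sum.cong) (auto simp: V_def)
    also have "\<dots> = vv i $ r * w $ i" using i by (simp add: sum.delta)
    finally have "vv i $ r * w $ i = 0" using z r by simp
    then show "w $ i = 0\<^sub>v N $ i" using r i by simp
  next
    show "dim_vec w = dim_vec (0\<^sub>v N :: 'a vec)" using w by simp
  qed
  with w(2) show False by simp
qed

definition U :: "'a mat" where "U = (SOME U. U \<in> carrier_mat N N \<and> U * V = 1\<^sub>m N \<and> V * U = 1\<^sub>m N)"

lemma U: "U \<in> carrier_mat N N" "U * V = 1\<^sub>m N" "V * U = 1\<^sub>m N"
proof -
  have "V \<in> Units (ring_mat TYPE('a) N ())" by (rule det_non_zero_imp_unit[OF cV V_det])
  then have "\<exists>U. U \<in> carrier_mat N N \<and> U * V = 1\<^sub>m N \<and> V * U = 1\<^sub>m N"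
    unfolding Units_def ring_mat_def by auto
  then have "U \<in> carrier_mat N N \<and> U * V = 1\<^sub>m N \<and> V * U = 1\<^sub>m N" unfolding U_def by (rule someI_ex)
  then show "U \<in> carrier_mat N N" "U * V = 1\<^sub>m N" "V * U = 1\<^sub>m N" by auto
qed

lemma vec_ext:
  assumes X: "X \<in> carrier_mat N N" and Y: "Y \<in> carrier_mat N N"
    and h: "\<And>k. k \<le> d \<Longrightarrow> X *\<^sub>v vv k = Y *\<^sub>v vv k"
  shows "X = Y"
proof -
  have XV: "X * V = Y * V"
  proof (rule eq_matI)
    fix r k assume "r < dim_row (Y * V)" "k < dim_col (Y * V)"
    then have rk: "r < N" "k < N" using Y by auto
    show "(X * V) $$ (r,k) = (Y * V) $$ (r,k)" using multV[OF X rk] multV[OF Y rk] h[of k] rk by simp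
  next
    show "dim_row (X * V) = dim_row (Y * V)" using X Y by simp
    show "dim_col (X * V) = dim_col (Y * V)" by simp
  qed
  have "X = X * (V * U)" using X U by simp
  also have "\<dots> = (X * V) * U" using X U by (simp add: massoc)
  also have "\<dots> = (Y * V) * U" using XV by simp
  also have "\<dots> = Y" using Y U by (simp add: massoc)
  finally show ?thesis .
qed

lemma E_form: assumes i: "i \<le> d" shows "E i = V * unitm N i i * U"
proof -
  have "E i = E i * (V * U)" using cE[OF i] U by simp
  also have "\<dots> = (E i * V) * U" using i U by (simp add: massoc)
  finally show ?thesis using E_V[OF i] by simp
qed

end


context CONC begin

lemma vvc: "k \<le> d \<Longrightarrow> vv k \<in> carrier_vec N" by (rule vv(1))

lemma mv_assoc: "X \<in> carrier_mat N N \<Longrightarrow> Y \<in> carrier_mat N N \<Longrightarrow> k \<le> d \<Longrightarrow> (X * Y) *\<^sub>v vv k = X *\<^sub>v (Y *\<^sub>v vv k)"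
  by (rule assoc_mult_mat_vec[of _ N N _ N]) (auto simp: vvc)

lemma idem: "idem_ax d A th E"
  unfolding idem_ax_def
proof (intro conjI allI impI ballI)
  show "A \<in> carrier_mat N N" by simp
  fix i assume i: "i \<le> d"
  show "E i \<in> carrier_mat N N" using i by simp
  show "A * E i = th i \<cdot>\<^sub>m E i"
  proof (rule vec_ext)
    show "A * E i \<in> carrier_mat N N" "th i \<cdot>\<^sub>m E i \<in> carrier_mat N N" using i by auto
    fix k assume k: "k \<le> d"
    have "(A * E i) *\<^sub>v vv k = A *\<^sub>v (E i *\<^sub>v vv k)" using i k by (simp add: mv_assoc)
    also have "\<dots> = (if k = i then th i \<cdot>\<^sub>v vv i else 0\<^sub>v N)"
      using E_vv[OF i k] vv(3)[OF k] by (cases "k = i") (simp_all add: mult_zero_vec[of _ N N])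
    also have "\<dots> = (th i \<cdot>\<^sub>m E i) *\<^sub>v vv k"
      using E_vv[OF i k] i k by (simp add: smult_mat_vec[of _ N N] vvc smult_zero_vec')
    finally show "(A * E i) *\<^sub>v vv k = (th i \<cdot>\<^sub>m E i) *\<^sub>v vv k" .
  qed
  show "E i * A = th i \<cdot>\<^sub>m E i"
  proof (rule vec_ext)
    show "E i * A \<in> carrier_mat N N" "th i \<cdot>\<^sub>m E i \<in> carrier_mat N N" using i by auto
    fix k assume k: "k \<le> d"
    have "(E i * A) *\<^sub>v vv k = E i *\<^sub>v (th k \<cdot>\<^sub>v vv k)" using i k vv(3)[OF k] by (simp add: mv_assoc)
    also have "\<dots> = th k \<cdot>\<^sub>v (E i *\<^sub>v vv k)" using i k by (intro mult_mat_vec[of _ N N]) (auto simp: vvc)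
    also have "\<dots> = (if k = i then th i \<cdot>\<^sub>v vv i else 0\<^sub>v N)"
      using E_vv[OF i k] by (simp add: smult_zero_vec')
    also have "\<dots> = (th i \<cdot>\<^sub>m E i) *\<^sub>v vv k"
      using E_vv[OF i k] i k by (simp add: smult_mat_vec[of _ N N] vvc smult_zero_vec')
    finally show "(E i * A) *\<^sub>v vv k = (th i \<cdot>\<^sub>m E i) *\<^sub>v vv k" .
  qed
  show "E i \<noteq> 0\<^sub>m N N"
  proof
    assume "E i = 0\<^sub>m N N"
    then have "E i *\<^sub>v vv i = 0\<^sub>v N" using vvc[OF i] by (simp add: zero_mult_vec)
    with E_vv[OF i i] vv(2)[OF i] show False by simp
  qed
  {
    fix j assume j: "j \<le> d"
    show "E i * E j = (if i = j then E i else 0\<^sub>m N N)"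
    proof (rule vec_ext)
      show "E i * E j \<in> carrier_mat N N" "(if i = j then E i else 0\<^sub>m N N) \<in> carrier_mat N N" using i j by auto
      fix k assume k: "k \<le> d"
      have "(E i * E j) *\<^sub>v vv k = E i *\<^sub>v (E j *\<^sub>v vv k)" using i j k by (simp add: mv_assoc)
      also have "\<dots> = (if i = j then E i else 0\<^sub>m N N) *\<^sub>v vv k"
        using E_vv[OF i k] E_vv[OF j k] i j k by (auto simp: mult_zero_vec[of _ N N] zero_mult_vec vvc)
      finally show "(E i * E j) *\<^sub>v vv k = (if i = j then E i else 0\<^sub>m N N) *\<^sub>v vv k" .
    qed
  }
  {
    fix M :: "'a mat" assume M: "M \<in> carrier_mat N N"
    let ?D = "unitm N i i :: 'a mat"
    define Z where "Z = U * M * V"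
    have cZ: "Z \<in> carrier_mat N N" unfolding Z_def using M U by simp
    have iN: "i < N" using i by simp
    have cD: "?D \<in> carrier_mat N N" by simp
    have "E i * M * E i = V * (?D * Z * ?D) * U"
      unfolding E_form[OF i] Z_def using M U cD by (simp add: mnorm)
    also have "?D * Z * ?D = Z $$ (i,i) \<cdot>\<^sub>m ?D" by (rule unitm_sandwich[OF cZ iN])
    also have "V * (Z $$ (i,i) \<cdot>\<^sub>m ?D) * U = Z $$ (i,i) \<cdot>\<^sub>m E i"
      unfolding E_form[OF i] using U cD by (simp add: mnorm)
    also have "Z $$ (i,i) = mtrace (E i * M)"
    proof -
      have "mtrace (E i * M) = mtrace (V * (?D * U * M))" unfolding E_form[OF i] using U M cD by (simp add: mnorm)
      also have "\<dots> = mtrace ((?D * U * M) * V)" using U M cD by (intro mtrace_comm[of _ N N]) auto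
      also have "\<dots> = mtrace (?D * Z)" unfolding Z_def using U M cD by (simp add: mnorm)
      also have "\<dots> = Z $$ (i,i)" by (rule mtrace_unitm[OF cZ iN])
      finally show ?thesis by simp
    qed
    finally show "E i * M * E i = mtrace (E i * M) \<cdot>\<^sub>m E i" .
  }
next
  fix X Y :: "'a mat" assume X: "X \<in> carrier_mat N N" and Y: "Y \<in> carrier_mat N N"
  {
    assume h: "\<forall>i\<le>d. E i * X = E i * Y"
    have UE: "U * E i = unitm N i i * U" if i: "i \<le> d" for i
    proof -
      have "U * E i = (U * V) * (unitm N i i * U)" unfolding E_form[OF i] using U(1) by (simp add: mnorm)
      also have "\<dots> = unitm N i i * U" unfolding U(2) using U by simp
      finally show ?thesis .
    qed
    have UXY: "U * X = U * Y"
    proof (rule eq_matI)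
      fix r s assume rs: "r < dim_row (U * Y)" "s < dim_col (U * Y)"
      then have rs': "r < N" "s < N" "r \<le> d" using U Y by auto
      have cUX: "U * X \<in> carrier_mat N N" "U * Y \<in> carrier_mat N N" using U X Y by auto
      have "unitm N r r * (U * X) = unitm N r r * (U * Y)"
      proof -
        have "unitm N r r * (U * X) = (U * E r) * X" using UE[OF rs'(3)] U X by (simp add: mnorm)
        also have "\<dots> = U * (E r * X)" using U X rs' by (simp add: mnorm)
        also have "\<dots> = U * (E r * Y)" using h rs' by simp
        also have "\<dots> = (U * E r) * Y" using U Y rs' by (simp add: mnorm)
        also have "\<dots> = unitm N r r * (U * Y)" using UE[OF rs'(3)] U Y by (simp add: mnorm)
        finally show ?thesis .
      qed
      then have "(unitm N r r * (U * X)) $$ (r,s) = (unitm N r r * (U * Y)) $$ (r,s)" by simp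
      then show "(U * X) $$ (r,s) = (U * Y) $$ (r,s)"
        using unitm_mult_index[OF cUX(1) rs'(1,2) rs'(1), of r] unitm_mult_index[OF cUX(2) rs'(1,2) rs'(1), of r] by simp
    next
      show "dim_row (U * X) = dim_row (U * Y)" by simp
      show "dim_col (U * X) = dim_col (U * Y)" using X Y by simp
    qed
    have "X = (V * U) * X" unfolding U(3) using X by simp
    also have "\<dots> = V * (U * X)" using U(1) X by (simp add: mnorm)
    also have "\<dots> = V * (U * Y)" using UXY by simp
    also have "\<dots> = (V * U) * Y" using U(1) Y by (simp add: mnorm)
    also have "\<dots> = Y" unfolding U(3) using Y by simp
    finally show "X = Y" .
  }
  {
    assume h: "\<forall>i\<le>d. X * E i = Y * E i"
    show "X = Y"
    proof (rule vec_ext[OF X Y])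
      fix k assume k: "k \<le> d"
      have "X *\<^sub>v vv k = X *\<^sub>v (E k *\<^sub>v vv k)" using E_vv[OF k k] by simp
      also have "\<dots> = (X * E k) *\<^sub>v vv k" using X k by (simp add: mv_assoc)
      also have "\<dots> = (Y * E k) *\<^sub>v vv k" using h k by simp
      also have "\<dots> = Y *\<^sub>v (E k *\<^sub>v vv k)" using Y k by (simp add: mv_assoc)
      also have "\<dots> = Y *\<^sub>v vv k" using E_vv[OF k k] by simp
      finally show "X *\<^sub>v vv k = Y *\<^sub>v vv k" .
    qed
  }
qed

end

lemma concrete_idem:
  assumes "A \<in> carrier_mat (Suc d) (Suc d)" "idem_ordering d A th E"
  shows "idem_ax d A th E"
proof -
  interpret C: CONC d A th E
    using assms by unfold_locales (auto simp: idem_ordering_def)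
  show ?thesis by (rule C.idem)
qed

theorem theorem14p6:
  fixes d :: nat and A As :: "'a::field mat" and E Es :: "nat \<Rightarrow> 'a mat"
    and th ths :: "nat \<Rightarrow> 'a"
  assumes "leonard_system d A As E Es"
    and "idem_ordering d A th E"
    and "idem_ordering d As ths Es"
    and "i \<le> d" and "j \<le> d"
  shows "ls_u A Es th i (th j) = ls_u As E ths j (ths i)"
proof -
  have cA: "A \<in> carrier_mat (Suc d) (Suc d)" and cAs: "As \<in> carrier_mat (Suc d) (Suc d)"
    using assms(1) by (auto simp: leonard_system_def mult_free_def)
  have t: "tridiag_cond d E As" "tridiag_cond d Es A" using assms(1) by (auto simp: leonard_system_def)
  have "lsax d A As th ths E Es"
    unfolding lsax_def using concrete_idem[OF cA assms(2)] concrete_idem[OF cAs assms(3)] t by simp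
  then show ?thesis using main_abstract assms(4,5) by blast
qed

end
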